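(* Let $N\ge1$, $q$ real with $0<|q|<1$, and $0<r<\frac{1-|q|}{|1-q|}$. For the $N$-particle $q$-TAZRP started from $Y=(y_N,\dots,y_1)\in\mathbf{S}$, for every $x\in\mathbb{Z}$ and $t\ge0$, $$\mathbb{P}_Y(x_N(t)=x)=\Big(\frac{1}{2\pi i}\Big)^N\oint_{\mathcal{C}_r}\cdots\oint_{\mathcal{C}_r}I(z_1,\dots,z_N)\prod_{i=1}^N z_i^{x-y_i-1}e^{\epsilon(z_i)t}\,dz_1\cdots dz_N,$$ where $$I(z_1,\dots,z_N)=\prod_{1\le i<j\le N}\frac{z_i-z_j}{z_i-qz_j-(1-q)z_iz_j}\cdot\frac{1-\prod_{i=1}^N z_i}{\prod_{i=1}^N(1-z_i)}$$ and $\epsilon(z)=\frac1z-1$.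
   Context: $[k]_q=1+q+\cdots+q^{k-1}$. $\mathbf{S}=\{(x_N,\dots,x_1)\in\mathbb{Z}^N:x_N\le\cdots\le x_1\}$ is the set of configurations of $N$ indistinguishable particles on $\mathbb{Z}$. The $q$-TAZRP is the continuous-time Markov chain on $\mathbf{S}$ in which, independently for each occupied site $\mathbf{x}$ holding $k$ particles, one particle jumps from $\mathbf{x}$ to $\mathbf{x}+1$ at rate $[k]_q$. $x_N(t)$ denotes the position of the left-most particle at time $t$, and $\mathbb{P}_Y$ the law of the process started at $Y$. $\mathcal{C}_r$ is the positively oriented circle of radius $r$ about $0$. *)

theory Defs
  imports "HOL-Analysis.Analysis" "HOL-Library.Multiset"
begin

definition qint :: "real \<Rightarrow> nat \<Rightarrow> real" where
  "qint q k = (\<Sum>i<k. q ^ i)"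

text \<open>Configurations of indistinguishable particles on Z are multisets of sites.\<close>
definition tazrp_gen :: "real \<Rightarrow> (int multiset \<Rightarrow> real) \<Rightarrow> int multiset \<Rightarrow> real" where
  "tazrp_gen q f X = (\<Sum>s\<in>set_mset X. qint q (count X s) *
       (f (add_mset (s + 1) (X - {#s#})) - f X))"

text \<open>Expectation E_X[f(X(t))] of the (bounded-rate) chain, via the transition semigroup
  exp(t L) = sum_n t^n/n! L^n.\<close>
definition tazrp_expect :: "real \<Rightarrow> real \<Rightarrow> (int multiset \<Rightarrow> real) \<Rightarrow> int multiset \<Rightarrow> real" where
  "tazrp_expect q t f X = (\<Sum>n. t ^ n / fact n * ((tazrp_gen q ^^ n) f) X)"

text \<open>P_Y(x_N(t) = x): probability that the left-most particle is at x at time t.\<close>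
definition leftmost_prob :: "real \<Rightarrow> int multiset \<Rightarrow> real \<Rightarrow> int \<Rightarrow> real" where
  "leftmost_prob q Y t x =
     tazrp_expect q t (\<lambda>X. if Min (set_mset X) = x then 1 else 0) Y"

text \<open>(1/(2 pi i)) times the contour integral over the positively oriented circle of
  radius r about 0, parametrised by z = r e^{i theta}, dz = i r e^{i theta} d theta.\<close>
definition circ_int :: "real \<Rightarrow> (complex \<Rightarrow> complex) \<Rightarrow> complex" where
  "circ_int r g = (1 / (2 * pi * \<i>)) *
     integral {0..2*pi} (\<lambda>\<theta>. g (of_real r * cis \<theta>) * (\<i> * of_real r * cis \<theta>))"

fun circ_int_n :: "real \<Rightarrow> nat \<Rightarrow> (complex list \<Rightarrow> complex) \<Rightarrow> complex" where
  "circ_int_n r 0 F = F []"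
| "circ_int_n r (Suc n) F = circ_int r (\<lambda>z. circ_int_n r n (\<lambda>zs. F (z # zs)))"

text \<open>The function I(z_1,...,z_N), with z_i = zs ! (i-1).\<close>
definition I_fun :: "real \<Rightarrow> nat \<Rightarrow> complex list \<Rightarrow> complex" where
  "I_fun q N zs =
     (\<Prod>i<N. \<Prod>j\<in>{i<..<N}. (zs!i - zs!j) /
         (zs!i - of_real q * zs!j - (1 - of_real q) * zs!i * zs!j)) *
     ((1 - (\<Prod>i<N. zs!i)) / (\<Prod>i<N. (1 - zs!i)))"

definition eps :: "complex \<Rightarrow> complex" where
  "eps z = 1 / z - 1"

end

theory Submission
  imports Defs "HOL-Complex_Analysis.Complex_Analysis"
begin

definition torus :: "real \<Rightarrow> nat \<Rightarrow> complex list set" where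
  "torus r n = {zs. length zs = n \<and> (\<forall>z\<in>set zs. cmod z = r)}"

definition lconv :: "(nat \<Rightarrow> complex list) \<Rightarrow> complex list \<Rightarrow> bool" where
  "lconv S zs \<longleftrightarrow> (\<forall>i<length zs. (\<lambda>k. S k ! i) \<longlonglongrightarrow> zs ! i)"

definition contl :: "real \<Rightarrow> nat \<Rightarrow> (complex list \<Rightarrow> complex) \<Rightarrow> bool" where
  "contl r n F \<longleftrightarrow> (\<exists>B. \<forall>zs\<in>torus r n. cmod (F zs) \<le> B) \<and>
     (\<forall>zs\<in>torus r n. \<forall>S. (\<forall>k. S k \<in> torus r n) \<longrightarrow> lconv S zs \<longrightarrow> (\<lambda>k. F (S k)) \<longlonglongrightarrow> F zs)"

lemma torus_Cons[simp]: "(z # zs \<in> torus r (Suc n)) \<longleftrightarrow> cmod z = r \<and> zs \<in> torus r n"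
  by (auto simp: torus_def)

lemma torus_append: "(xs @ ys \<in> torus r n) \<longleftrightarrow> (\<exists>m. m \<le> n \<and> xs \<in> torus r m \<and> ys \<in> torus r (n - m))"
  by (auto simp: torus_def)

lemma torus_length: "zs \<in> torus r n \<Longrightarrow> length zs = n"
  by (auto simp: torus_def)

lemma torus_nth: "zs \<in> torus r n \<Longrightarrow> i < n \<Longrightarrow> cmod (zs ! i) = r"
  by (auto simp: torus_def)

lemma torus_nthI: "length zs = n \<Longrightarrow> (\<And>i. i < n \<Longrightarrow> cmod (zs ! i) = r) \<Longrightarrow> zs \<in> torus r n"
  by (auto simp: torus_def in_set_conv_nth)

lemma contlI:
  assumes "\<And>zs. zs \<in> torus r n \<Longrightarrow> cmod (F zs) \<le> B"
    and "\<And>zs S. zs \<in> torus r n \<Longrightarrow> (\<And>k. S k \<in> torus r n) \<Longrightarrow> lconv S zs \<Longrightarrow> (\<lambda>k. F (S k)) \<longlonglongrightarrow> F zs"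
  shows "contl r n F"
  using assms unfolding contl_def by blast

lemma contl_bound: "contl r n F \<Longrightarrow> \<exists>B. \<forall>zs\<in>torus r n. cmod (F zs) \<le> B"
  unfolding contl_def by blast

lemma contl_bound_pos: "contl r n F \<Longrightarrow> \<exists>B>0. \<forall>zs\<in>torus r n. cmod (F zs) \<le> B"
proof -
  assume "contl r n F"
  then obtain B where "\<forall>zs\<in>torus r n. cmod (F zs) \<le> B" using contl_bound by blast
  then show ?thesis by (intro exI[of _ "max B 1"]) force
qed

lemma contl_tendsto: "contl r n F \<Longrightarrow> zs \<in> torus r n \<Longrightarrow> (\<And>k. S k \<in> torus r n) \<Longrightarrow> lconv S zs \<Longrightarrow> (\<lambda>k. F (S k)) \<longlonglongrightarrow> F zs"
  unfolding contl_def by blast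

lemma contl_const[simp, intro]: "contl r n (\<lambda>_. c)"
  by (rule contlI[of _ _ _ "cmod c"]) auto

lemma contl_nth[intro]: "i < n \<Longrightarrow> contl r n (\<lambda>zs. zs ! i)"
  by (rule contlI[of _ _ _ "r"]) (auto simp: torus_nth lconv_def torus_length)

lemma contl_add[intro]: "contl r n F \<Longrightarrow> contl r n G \<Longrightarrow> contl r n (\<lambda>zs. F zs + G zs)"
proof -
  assume F: "contl r n F" and G: "contl r n G"
  obtain B1 where B1: "\<forall>zs\<in>torus r n. cmod (F zs) \<le> B1" using contl_bound[OF F] by blast
  obtain B2 where B2: "\<forall>zs\<in>torus r n. cmod (G zs) \<le> B2" using contl_bound[OF G] by blast
  show ?thesis
  proof (rule contlI[of _ _ _ "B1 + B2"])
    fix zs assume "zs \<in> torus r n" then show "cmod (F zs + G zs) \<le> B1 + B2"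
      using B1 B2 by (meson add_mono norm_triangle_le)
  next
    fix zs S assume "zs \<in> torus r n" "\<And>k. S k \<in> torus r n" "lconv S zs"
    then show "(\<lambda>k. F (S k) + G (S k)) \<longlonglongrightarrow> F zs + G zs"
      using contl_tendsto[OF F] contl_tendsto[OF G] by (intro tendsto_add) auto
  qed
qed

lemma contl_mult[intro]: "contl r n F \<Longrightarrow> contl r n G \<Longrightarrow> contl r n (\<lambda>zs. F zs * G zs)"
proof -
  assume F: "contl r n F" and G: "contl r n G"
  obtain B1 where B1: "B1 > 0" "\<forall>zs\<in>torus r n. cmod (F zs) \<le> B1" using contl_bound_pos[OF F] by blast
  obtain B2 where B2: "B2 > 0" "\<forall>zs\<in>torus r n. cmod (G zs) \<le> B2" using contl_bound_pos[OF G] by blast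
  show ?thesis
  proof (rule contlI[of _ _ _ "B1 * B2"])
    fix zs assume "zs \<in> torus r n" then show "cmod (F zs * G zs) \<le> B1 * B2"
      using B1 B2 by (simp add: norm_mult mult_mono)
  next
    fix zs S assume "zs \<in> torus r n" "\<And>k. S k \<in> torus r n" "lconv S zs"
    then show "(\<lambda>k. F (S k) * G (S k)) \<longlonglongrightarrow> F zs * G zs"
      using contl_tendsto[OF F] contl_tendsto[OF G] by (intro tendsto_mult) auto
  qed
qed

lemma contl_minus[intro]: "contl r n F \<Longrightarrow> contl r n (\<lambda>zs. - F zs)"
  using contl_mult[of r n "\<lambda>_. -1" F] by simp

lemma contl_diff[intro]: "contl r n F \<Longrightarrow> contl r n G \<Longrightarrow> contl r n (\<lambda>zs. F zs - G zs)"
  using contl_add[of r n F "\<lambda>zs. - G zs"] by auto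

lemma contl_sum[intro]: "(\<And>i. i \<in> A \<Longrightarrow> contl r n (F i)) \<Longrightarrow> contl r n (\<lambda>zs. \<Sum>i\<in>A. F i zs)"
  by (induction A rule: infinite_finite_induct) auto

lemma contl_prod[intro]: "(\<And>i. i \<in> A \<Longrightarrow> contl r n (F i)) \<Longrightarrow> contl r n (\<lambda>zs. \<Prod>i\<in>A. F i zs)"
  by (induction A rule: infinite_finite_induct) auto

lemma contl_power[intro]: "contl r n F \<Longrightarrow> contl r n (\<lambda>zs. F zs ^ m)"
  by (induction m) auto

lemma contl_inverse:
  assumes F: "contl r n F" and d: "d > 0" and low: "\<And>zs. zs \<in> torus r n \<Longrightarrow> cmod (F zs) \<ge> d"
  shows "contl r n (\<lambda>zs. inverse (F zs))"
proof (rule contlI[of _ _ _ "1/d"])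
  fix zs assume "zs \<in> torus r n" then show "cmod (inverse (F zs)) \<le> 1 / d"
    using low[of zs] d by (simp add: norm_inverse) (metis inverse_eq_divide le_imp_inverse_le)
next
  fix zs S assume "zs \<in> torus r n" "\<And>k. S k \<in> torus r n" "lconv S zs"
  then show "(\<lambda>k. inverse (F (S k))) \<longlonglongrightarrow> inverse (F zs)"
    using contl_tendsto[OF F] low[of zs] d by (intro tendsto_inverse) auto
qed

lemma contl_divide:
  assumes "contl r n F" "contl r n G" "d > 0" "\<And>zs. zs \<in> torus r n \<Longrightarrow> cmod (G zs) \<ge> d"
  shows "contl r n (\<lambda>zs. F zs / G zs)"
  using contl_mult[OF assms(1) contl_inverse[OF assms(2-4)]] by (simp add: divide_inverse)

lemma contl_exp[intro]: "contl r n F \<Longrightarrow> contl r n (\<lambda>zs. exp (F zs))"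
proof -
  assume F: "contl r n F"
  obtain B where B: "\<forall>zs\<in>torus r n. cmod (F zs) \<le> B" using contl_bound[OF F] by blast
  show ?thesis
  proof (rule contlI[of _ _ _ "exp B"])
    fix zs assume "zs \<in> torus r n" then show "cmod (exp (F zs)) \<le> exp B"
      using B by (meson exp_le_cancel_iff norm_exp order_trans)
  next
    fix zs S assume "zs \<in> torus r n" "\<And>k. S k \<in> torus r n" "lconv S zs"
    then show "(\<lambda>k. exp (F (S k))) \<longlonglongrightarrow> exp (F zs)"
      using contl_tendsto[OF F] by (intro tendsto_exp) auto
  qed
qed

lemma contl_powi_nth:
  assumes "i < n" "r > 0"
  shows "contl r n (\<lambda>zs. (zs ! i) powi m)"
proof (rule contlI[of _ _ _ "r powi m"])
  fix zs assume "zs \<in> torus r n" then show "cmod ((zs ! i) powi m) \<le> r powi m"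
    using assms by (simp add: norm_power_int torus_nth)
next
  fix zs S assume "zs \<in> torus r n" "\<And>k. S k \<in> torus r n" "lconv S zs"
  then show "(\<lambda>k. (S k ! i) powi m) \<longlonglongrightarrow> (zs ! i) powi m"
    using assms torus_nth[of zs r n i] by (intro tendsto_power_int) (auto simp: lconv_def torus_length)
qed

lemma contl_compose:
  assumes F: "contl r m F"
    and g: "\<And>zs. zs \<in> torus r n \<Longrightarrow> g zs \<in> torus r m"
    and gc: "\<And>zs S. zs \<in> torus r n \<Longrightarrow> (\<And>k. S k \<in> torus r n) \<Longrightarrow> lconv S zs \<Longrightarrow> lconv (\<lambda>k. g (S k)) (g zs)"
  shows "contl r n (\<lambda>zs. F (g zs))"
proof -
  obtain B where B: "\<forall>zs\<in>torus r m. cmod (F zs) \<le> B" using contl_bound[OF F] by blast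
  show ?thesis
    by (rule contlI[of _ _ _ B]) (use B g gc contl_tendsto[OF F] in auto)
qed

definition circ_ig :: "real \<Rightarrow> (complex \<Rightarrow> complex) \<Rightarrow> real \<Rightarrow> complex" where
  "circ_ig r g = (\<lambda>\<theta>. g (of_real r * cis \<theta>) * (\<i> * of_real r * cis \<theta>))"

lemma circ_int_ig: "circ_int r g = (1 / (2 * pi * \<i>)) * integral {0..2*pi} (circ_ig r g)"
  by (simp add: circ_int_def circ_ig_def)

lemma norm_rcis[simp]: "r \<ge> 0 \<Longrightarrow> cmod (of_real r * cis t) = r"
  by (simp add: norm_mult)

lemma circ_int_cong:
  assumes "r \<ge> 0" "\<And>z. cmod z = r \<Longrightarrow> g z = h z"
  shows "circ_int r g = circ_int r h"
  unfolding circ_int_def using assms by (simp add: norm_mult)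

lemma circ_int_n_cong:
  assumes "r \<ge> 0" "\<And>zs. zs \<in> torus r n \<Longrightarrow> F zs = G zs"
  shows "circ_int_n r n F = circ_int_n r n G"
  using assms(2)
proof (induction n arbitrary: F G)
  case 0 then show ?case by (simp add: torus_def)
next
  case (Suc n)
  show ?case
    by (simp, rule circ_int_cong[OF assms(1)], rule Suc.IH) (use Suc.prems in auto)
qed

lemma circ_int_n_snoc:
  "circ_int_n r (Suc n) F = circ_int_n r n (\<lambda>zs. circ_int r (\<lambda>z. F (zs @ [z])))"
proof (induction n arbitrary: F)
  case 0 then show ?case by simp
next
  case (Suc n)
  have "circ_int_n r (Suc (Suc n)) F = circ_int r (\<lambda>z. circ_int_n r (Suc n) (\<lambda>zs. F (z # zs)))"
    by (simp only: circ_int_n.simps)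
  also have "\<dots> = circ_int r (\<lambda>z. circ_int_n r n (\<lambda>zs. circ_int r (\<lambda>w. F (z # zs @ [w]))))"
    by (simp only: Suc.IH append_Cons)
  finally show ?case by (simp only: circ_int_n.simps append_Cons)
qed

lemma lconv_const[simp]: "lconv (\<lambda>k. zs) zs"
  by (simp add: lconv_def)

lemma lconv_append:
  assumes "lconv S xs" "lconv T ys" "\<And>k. length (S k) = length xs"
  shows "lconv (\<lambda>k. S k @ T k) (xs @ ys)"
  unfolding lconv_def
proof (intro allI impI)
  fix i assume i: "i < length (xs @ ys)"
  show "(\<lambda>k. (S k @ T k) ! i) \<longlonglongrightarrow> (xs @ ys) ! i"
  proof (cases "i < length xs")
    case True then show ?thesis using assms by (simp add: nth_append lconv_def)
  next
    case False then show ?thesis using assms i by (simp add: nth_append lconv_def)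
  qed
qed

lemma lconv_Cons:
  assumes "(\<lambda>k. s k) \<longlonglongrightarrow> z" "lconv T ys"
  shows "lconv (\<lambda>k. s k # T k) (z # ys)"
  using assms unfolding lconv_def by (auto simp: nth_Cons split: nat.splits)

lemma lconv_single:
  assumes "(\<lambda>k. s k) \<longlonglongrightarrow> z"
  shows "lconv (\<lambda>k. [s k]) [z]"
  using assms by (simp add: lconv_def)

lemma tendsto_rcis: "u \<longlonglongrightarrow> a \<Longrightarrow> (\<lambda>k. of_real r * cis (u k)) \<longlonglongrightarrow> of_real r * cis a"
  by (intro tendsto_intros) auto

lemma contl_snoc_cont:
  assumes F: "contl r (Suc m) F" and ps: "ps \<in> torus r m" and r: "r \<ge> 0"
  shows "continuous_on A (\<lambda>\<theta>. F (ps @ [of_real r * cis \<theta>]))"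
proof (rule continuous_on_sequentiallyI)
  fix u a assume "\<forall>n. u n \<in> A" "a \<in> A" "u \<longlonglongrightarrow> a"
  have L: "lconv (\<lambda>k. ps @ [of_real r * cis (u k)]) (ps @ [of_real r * cis a])"
    by (rule lconv_append) (auto intro!: lconv_single tendsto_rcis \<open>u \<longlonglongrightarrow> a\<close> simp: torus_length[OF ps])
  have T: "ps @ [of_real r * cis t] \<in> torus r (Suc m)" for t
    using ps r by (auto simp: torus_def)
  show "(\<lambda>n. F (ps @ [of_real r * cis (u n)])) \<longlonglongrightarrow> F (ps @ [of_real r * cis a])"
    by (rule contl_tendsto[OF F T T L])
qed

lemma contl_snoc_integrable:
  assumes F: "contl r (Suc m) F" and ps: "ps \<in> torus r m" and r: "r \<ge> 0"
  shows "circ_ig r (\<lambda>z. F (ps @ [z])) integrable_on {0..2*pi}"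
  unfolding circ_ig_def
  by (rule integrable_continuous_interval, intro continuous_intros contl_snoc_cont[OF F ps r])

lemma contl_single_integrable:
  assumes F: "contl r 1 F" and r: "r \<ge> 0"
  shows "circ_ig r (\<lambda>z. F [z]) integrable_on {0..2*pi}"
  using contl_snoc_integrable[of r 0 F "[]"] assms by (simp add: torus_def)

lemma circ_int_bound:
  assumes "circ_ig r g integrable_on {0..2*pi}" "r \<ge> 0" "\<And>z. cmod z = r \<Longrightarrow> cmod (g z) \<le> B"
  shows "cmod (circ_int r g) \<le> r * B"
proof -
  have "norm (integral {0..2*pi} (circ_ig r g)) \<le> integral {0..2*pi} (\<lambda>_. r * B)"
  proof (rule integral_norm_bound_integral[OF assms(1)])
    fix t assume "t \<in> {0..2*pi}"
    show "norm (circ_ig r g t) \<le> r * B"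
    proof -
      have "cmod (g (of_real r * cis t)) \<le> B" using assms(2) assms(3)[of "of_real r * cis t"] by simp
      from mult_left_mono[OF this assms(2)] show ?thesis using assms(2) by (simp add: circ_ig_def norm_mult mult.commute)
    qed
  qed auto
  also have "\<dots> = 2 * pi * (r * B)" by simp
  finally have "norm (integral {0..2*pi} (circ_ig r g)) \<le> 2 * pi * (r * B)" .
  then show ?thesis
    by (simp add: circ_int_ig norm_mult norm_divide divide_simps mult.commute)
qed

lemma circ_int_add:
  assumes "circ_ig r f integrable_on {0..2*pi}" "circ_ig r g integrable_on {0..2*pi}"
  shows "circ_int r (\<lambda>z. f z + g z) = circ_int r f + circ_int r g"
proof -
  have "circ_ig r (\<lambda>z. f z + g z) = (\<lambda>t. circ_ig r f t + circ_ig r g t)"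
    by (auto simp: circ_ig_def algebra_simps)
  then show ?thesis using assms by (simp add: circ_int_ig integral_add distrib_left)
qed

lemma circ_int_mult: "circ_int r (\<lambda>z. c * f z) = c * circ_int r f"
proof -
  have "circ_ig r (\<lambda>z. c * f z) = (\<lambda>t. c * circ_ig r f t)"
    by (auto simp: circ_ig_def algebra_simps)
  then show ?thesis by (simp add: circ_int_ig)
qed

lemma contl_param:
  assumes F: "contl r (Suc m) F" and r: "r \<ge> 0"
  shows "contl r m (\<lambda>ps. circ_int r (\<lambda>z. F (ps @ [z])))"
proof -
  obtain B where B: "\<forall>zs\<in>torus r (Suc m). cmod (F zs) \<le> B" using contl_bound[OF F] by blast
  have T: "ps @ [z] \<in> torus r (Suc m)" if "ps \<in> torus r m" "cmod z = r" for ps z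
    using that by (auto simp: torus_def)
  show ?thesis
  proof (rule contlI[of _ _ _ "r * B"])
    fix ps assume ps: "ps \<in> torus r m"
    show "cmod (circ_int r (\<lambda>z. F (ps @ [z]))) \<le> r * B"
      by (rule circ_int_bound[OF contl_snoc_integrable[OF F ps r] r]) (use B T ps in auto)
  next
    fix ps S assume ps: "ps \<in> torus r m" and S: "\<And>k. S k \<in> torus r m" and L: "lconv S ps"
    have "(\<lambda>k. integral {0..2*pi} (circ_ig r (\<lambda>z. F (S k @ [z])))) \<longlonglongrightarrow> integral {0..2*pi} (circ_ig r (\<lambda>z. F (ps @ [z])))"
    proof (rule dominated_convergence(2))
      show "circ_ig r (\<lambda>z. F (S k @ [z])) integrable_on {0..2*pi}" for k
        by (rule contl_snoc_integrable[OF F S r])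
      show "(\<lambda>_. r * B) integrable_on {0..2*pi}" by auto
      show "norm (circ_ig r (\<lambda>z. F (S k @ [z])) t) \<le> r * B" if "t \<in> {0..2*pi}" for k t
      proof -
        have "cmod (F (S k @ [of_real r * cis t])) \<le> B" using B T[OF S, of "of_real r * cis t"] r by auto
        from mult_left_mono[OF this r] show ?thesis using r by (simp add: circ_ig_def norm_mult mult.commute)
      qed
      show "(\<lambda>k. circ_ig r (\<lambda>z. F (S k @ [z])) t) \<longlonglongrightarrow> circ_ig r (\<lambda>z. F (ps @ [z])) t" if "t \<in> {0..2*pi}" for t
      proof -
        have "lconv (\<lambda>k. S k @ [of_real r * cis t]) (ps @ [of_real r * cis t])"
          by (rule lconv_append) (use L S ps torus_length[OF S] torus_length[OF ps] in \<open>auto\<close>)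
        then have "(\<lambda>k. F (S k @ [of_real r * cis t])) \<longlonglongrightarrow> F (ps @ [of_real r * cis t])"
          using contl_tendsto[OF F T[OF ps] T[OF S]] r by simp
        then show ?thesis unfolding circ_ig_def by (intro tendsto_intros)
      qed
    qed
    then show "(\<lambda>k. circ_int r (\<lambda>z. F (S k @ [z]))) \<longlonglongrightarrow> circ_int r (\<lambda>z. F (ps @ [z]))"
      unfolding circ_int_ig by (intro tendsto_intros)
  qed
qed

lemma contl_paramn:
  assumes "contl r (m + n) F" "r \<ge> 0"
  shows "contl r m (\<lambda>ps. circ_int_n r n (\<lambda>zs. F (ps @ zs)))"
  using assms(1)
proof (induction n arbitrary: m)
  case 0 then show ?case by simp
next
  case (Suc n)
  have "contl r (Suc m) (\<lambda>ps. circ_int_n r n (\<lambda>zs. F (ps @ zs)))"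
    by (rule Suc.IH) (use Suc.prems in simp)
  from contl_param[OF this assms(2)] show ?case by simp
qed

lemma contl_prefix:
  assumes F: "contl r (m + n) F" and ps: "ps \<in> torus r m"
  shows "contl r n (\<lambda>zs. F (ps @ zs))"
proof (rule contl_compose[OF F])
  show "ps @ zs \<in> torus r (m + n)" if "zs \<in> torus r n" for zs
    using that ps by (auto simp: torus_def)
  show "lconv (\<lambda>k. ps @ S k) (ps @ zs)" if "zs \<in> torus r n" "\<And>k. S k \<in> torus r n" "lconv S zs" for zs S
    by (rule lconv_append) (use that in auto)
qed

lemma contl_Cons:
  assumes F: "contl r (Suc n) F" and z: "cmod z = r"
  shows "contl r n (\<lambda>zs. F (z # zs))"
  using contl_prefix[of r 1 n F "[z]"] assms by (simp add: torus_def)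

lemma contl_circ_Cons:
  assumes F: "contl r (Suc n) F" and r: "r \<ge> 0"
  shows "circ_ig r (\<lambda>z. circ_int_n r n (\<lambda>zs. F (z # zs))) integrable_on {0..2*pi}"
proof -
  have "contl r 1 (\<lambda>ps. circ_int_n r n (\<lambda>zs. F (ps @ zs)))"
    by (rule contl_paramn) (use assms in auto)
  from contl_single_integrable[OF this r] show ?thesis by simp
qed

lemma circ_int_n_add:
  assumes "contl r n F" "contl r n G" "r \<ge> 0"
  shows "circ_int_n r n (\<lambda>zs. F zs + G zs) = circ_int_n r n F + circ_int_n r n G"
  using assms(1,2)
proof (induction n arbitrary: F G)
  case 0 then show ?case by simp
next
  case (Suc n)
  have "circ_int_n r (Suc n) (\<lambda>zs. F zs + G zs) =
        circ_int r (\<lambda>z. circ_int_n r n (\<lambda>zs. F (z # zs)) + circ_int_n r n (\<lambda>zs. G (z # zs)))"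
    by (simp, rule circ_int_cong[OF assms(3)], rule Suc.IH; rule contl_Cons; (rule Suc.prems | assumption))
  also have "\<dots> = circ_int_n r (Suc n) F + circ_int_n r (Suc n) G"
    by (simp, rule circ_int_add) (auto intro: contl_circ_Cons Suc.prems assms(3))
  finally show ?case .
qed

lemma circ_int_n_mult: "circ_int_n r n (\<lambda>zs. c * F zs) = c * circ_int_n r n F"
  by (induction n arbitrary: F) (simp_all add: circ_int_mult)

lemma circ_int_n_diff:
  assumes "contl r n F" "contl r n G" "r \<ge> 0"
  shows "circ_int_n r n (\<lambda>zs. F zs - G zs) = circ_int_n r n F - circ_int_n r n G"
  using circ_int_n_add[of r n F "\<lambda>zs. (-1) * G zs"] circ_int_n_mult[of r n "-1" G] assms by auto

lemma circ_int_n_sum: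
  assumes "\<And>i. i \<in> A \<Longrightarrow> contl r n (F i)" "r \<ge> 0"
  shows "circ_int_n r n (\<lambda>zs. \<Sum>i\<in>A. F i zs) = (\<Sum>i\<in>A. circ_int_n r n (F i))"
  using assms(1)
proof (induction A rule: infinite_finite_induct)
  case (infinite A) then show ?case using circ_int_n_mult[of r n 0 "\<lambda>_. 0"] by simp
next
  case empty then show ?case using circ_int_n_mult[of r n 0 "\<lambda>_. 0"] by simp
next
  case (insert a A)
  then show ?case by (simp, subst circ_int_n_add) (auto intro!: contl_sum assms(2))
qed

lemma circ_int_n_bound:
  assumes "contl r n F" "r \<ge> 0" "\<And>zs. zs \<in> torus r n \<Longrightarrow> cmod (F zs) \<le> B"
  shows "cmod (circ_int_n r n F) \<le> r ^ n * B"
  using assms(1,3)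
proof (induction n arbitrary: F)
  case 0 then show ?case by (simp add: torus_def)
next
  case (Suc n)
  have "cmod (circ_int r (\<lambda>z. circ_int_n r n (\<lambda>zs. F (z # zs)))) \<le> r * (r ^ n * B)"
  proof (rule circ_int_bound[OF contl_circ_Cons[OF Suc.prems(1) assms(2)] assms(2)])
    fix z :: complex assume z: "cmod z = r"
    show "cmod (circ_int_n r n (\<lambda>zs. F (z # zs))) \<le> r ^ n * B"
      by (rule Suc.IH) (use z Suc.prems in \<open>auto intro: contl_Cons\<close>)
  qed
  then show ?case by simp
qed

lemma contl2_cont:
  assumes G: "contl r 2 G" and r: "r \<ge> 0"
  shows "continuous_on S (\<lambda>p. G [of_real r * cis (fst p), of_real r * cis (snd p)])"
proof (rule continuous_on_sequentiallyI)
  fix u a assume "\<forall>n. u n \<in> S" "a \<in> S" and ua: "u \<longlonglongrightarrow> a"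
  have T: "[of_real r * cis x, of_real r * cis y] \<in> torus r 2" for x y
    using r by (auto simp: torus_def)
  have L: "lconv (\<lambda>k. [of_real r * cis (fst (u k)), of_real r * cis (snd (u k))])
                 [of_real r * cis (fst a), of_real r * cis (snd a)]"
    by (intro lconv_Cons lconv_single tendsto_rcis tendsto_fst tendsto_snd ua)
  show "(\<lambda>n. G [of_real r * cis (fst (u n)), of_real r * cis (snd (u n))]) \<longlonglongrightarrow>
        G [of_real r * cis (fst a), of_real r * cis (snd a)]"
    by (rule contl_tendsto[OF G T T L])
qed

lemma circ_int_fubini:
  assumes G: "contl r 2 G" and r: "r \<ge> 0"
  shows "circ_int r (\<lambda>a. circ_int r (\<lambda>b. G [a, b])) = circ_int r (\<lambda>b. circ_int r (\<lambda>a. G [a, b]))"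
proof -
  define c where "c = 1 / (2 * pi * \<i>)"
  define w where "w = (\<lambda>t. \<i> * of_real r * cis t)"
  define K where "K = (\<lambda>x y. (G [of_real r * cis x, of_real r * cis y] * w y) * w x)"
  have K': "\<And>x y. K x y = (G [of_real r * cis x, of_real r * cis y] * w x) * w y"
    by (simp add: K_def mult_ac)
  have E: "circ_int r (\<lambda>a. circ_int r (\<lambda>b. G [a, b])) =
      c * integral {0..2*pi} (\<lambda>x. (c * integral {0..2*pi} (\<lambda>y. G [of_real r * cis x, of_real r * cis y] * w y)) * w x)"
    unfolding circ_int_ig circ_ig_def c_def w_def by (rule refl)
  have E2: "circ_int r (\<lambda>b. circ_int r (\<lambda>a. G [a, b])) =
      c * integral {0..2*pi} (\<lambda>y. (c * integral {0..2*pi} (\<lambda>x. G [of_real r * cis x, of_real r * cis y] * w x)) * w y)"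
    unfolding circ_int_ig circ_ig_def c_def w_def by (rule refl)
  have K1: "\<And>x. integral {0..2*pi} (\<lambda>y. K x y) = integral {0..2*pi} (\<lambda>y. G [of_real r * cis x, of_real r * cis y] * w y) * w x"
    unfolding K_def by (rule integral_mult_left)
  have K2: "\<And>y. integral {0..2*pi} (\<lambda>x. K x y) = integral {0..2*pi} (\<lambda>x. G [of_real r * cis x, of_real r * cis y] * w x) * w y"
    unfolding K' by (rule integral_mult_left)
  have L: "circ_int r (\<lambda>a. circ_int r (\<lambda>b. G [a, b])) = c * (c * integral {0..2*pi} (\<lambda>x. integral {0..2*pi} (\<lambda>y. K x y)))"
    unfolding E K1 mult.assoc integral_mult_right by (rule refl)
  have R: "circ_int r (\<lambda>b. circ_int r (\<lambda>a. G [a, b])) = c * (c * integral {0..2*pi} (\<lambda>y. integral {0..2*pi} (\<lambda>x. K x y)))"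
    unfolding E2 K2 mult.assoc integral_mult_right by (rule refl)
  have C: "continuous_on (cbox (0, 0) (2*pi, 2*pi)) (\<lambda>(x, y). K x y)"
  proof -
    have "continuous_on (cbox (0, 0) (2*pi, 2*pi)) (\<lambda>p. G [of_real r * cis (fst p), of_real r * cis (snd p)] * w (snd p) * w (fst p))"
      unfolding w_def by (intro continuous_intros contl2_cont[OF G r])
    then show ?thesis by (simp add: K_def case_prod_beta')
  qed
  have "integral (cbox 0 (2*pi)) (\<lambda>x. integral (cbox 0 (2*pi)) (K x)) =
        integral (cbox 0 (2*pi)) (\<lambda>y. integral (cbox 0 (2*pi)) (\<lambda>x. K x y))"
    by (rule integral_swap_continuous[OF C])
  then show ?thesis using L R by (simp add: cbox_interval)
qed

definition swp :: "nat \<Rightarrow> 'a list \<Rightarrow> 'a list" where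
  "swp p zs = zs[p := zs ! Suc p, Suc p := zs ! p]"

lemma length_swp[simp]: "length (swp p zs) = length zs"
  by (simp add: swp_def)

lemma nth_swp: "i < length zs \<Longrightarrow> Suc p < length zs \<Longrightarrow>
   swp p zs ! i = zs ! (if i = p then Suc p else if i = Suc p then p else i)"
  by (auto simp: swp_def nth_list_update)

lemma swp_Cons[simp]: "swp (Suc p) (z # zs) = z # swp p zs"
  by (simp add: swp_def)

lemma swp_torus: "zs \<in> torus r n \<Longrightarrow> Suc p < n \<Longrightarrow> swp p zs \<in> torus r n"
  by (rule torus_nthI) (auto simp: torus_length nth_swp torus_nth)

lemma contl_swp:
  assumes F: "contl r n F" and p: "Suc p < n"
  shows "contl r n (\<lambda>zs. F (swp p zs))"
proof (rule contl_compose[OF F])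
  show "swp p zs \<in> torus r n" if "zs \<in> torus r n" for zs using swp_torus that p by blast
  show "lconv (\<lambda>k. swp p (S k)) (swp p zs)" if "zs \<in> torus r n" "\<And>k. S k \<in> torus r n" "lconv S zs" for zs S
    using that p torus_length[OF that(2)] torus_length[OF that(1)] unfolding lconv_def
    by (auto simp: nth_swp)
qed

lemma circ_int_n_swap0:
  assumes F: "contl r (Suc (Suc n)) F" and r: "r \<ge> 0"
  shows "circ_int_n r (Suc (Suc n)) F = circ_int_n r (Suc (Suc n)) (\<lambda>zs. F (swp 0 zs))"
proof -
  define G where "G = (\<lambda>ps. circ_int_n r n (\<lambda>zs. F (ps @ zs)))"
  have G: "contl r 2 G" unfolding G_def by (rule contl_paramn) (use F r in simp_all)
  have "circ_int_n r (Suc (Suc n)) F = circ_int r (\<lambda>a. circ_int r (\<lambda>b. G [a, b]))"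
    by (simp add: G_def)
  also have "\<dots> = circ_int r (\<lambda>b. circ_int r (\<lambda>a. G [a, b]))"
    by (rule circ_int_fubini[OF G r])
  also have "\<dots> = circ_int_n r (Suc (Suc n)) (\<lambda>zs. F (swp 0 zs))"
    by (simp add: G_def swp_def)
  finally show ?thesis .
qed

lemma circ_int_n_swap:
  assumes "contl r n F" "Suc p < n" "r \<ge> 0"
  shows "circ_int_n r n F = circ_int_n r n (\<lambda>zs. F (swp p zs))"
  using assms(1,2)
proof (induction p arbitrary: n F)
  case 0
  then obtain m where n: "n = Suc (Suc m)" by (metis Suc_lessE less_imp_Suc_add)
  show ?case using circ_int_n_swap0[of r m F] 0 assms(3) n by simp
next
  case (Suc p)
  then obtain m where n: "n = Suc m" by (metis Suc_lessE)
  have "circ_int_n r (Suc m) F = circ_int r (\<lambda>z. circ_int_n r m (\<lambda>zs. F (z # zs)))" by simp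
  also have "\<dots> = circ_int r (\<lambda>z. circ_int_n r m (\<lambda>zs. F (z # swp p zs)))"
    by (rule circ_int_cong[OF assms(3)], rule Suc.IH, rule contl_Cons) (use Suc.prems n in auto)
  also have "\<dots> = circ_int_n r (Suc m) (\<lambda>zs. F (swp (Suc p) zs))"
    by (simp add: swp_def)
  finally show ?case using n by simp
qed

lemma circ_int_n_rot:
  assumes "contl r (Suc n) F" "r \<ge> 0"
  shows "circ_int_n r (Suc n) F = circ_int_n r n (\<lambda>zs. circ_int r (\<lambda>z. F (z # zs)))"
  using assms(1)
proof (induction n arbitrary: F)
  case 0 then show ?case by simp
next
  case (Suc n)
  have "circ_int_n r (Suc (Suc n)) F = circ_int_n r (Suc (Suc n)) (\<lambda>zs. F (swp 0 zs))"
    by (rule circ_int_n_swap0[OF Suc.prems assms(2)])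
  also have "\<dots> = circ_int r (\<lambda>b. circ_int_n r (Suc n) (\<lambda>zs. F (swp 0 (b # zs))))"
    by (simp only: circ_int_n.simps)
  also have "\<dots> = circ_int r (\<lambda>b. circ_int_n r n (\<lambda>ws. circ_int r (\<lambda>z. F (swp 0 (b # z # ws)))))"
  proof (rule circ_int_cong[OF assms(2)])
    fix b :: complex assume b: "cmod b = r"
    have "contl r (Suc n) (\<lambda>zs. F (swp 0 (b # zs)))"
      using contl_Cons[OF contl_swp[OF Suc.prems, of 0] b] by simp
    then show "circ_int_n r (Suc n) (\<lambda>zs. F (swp 0 (b # zs))) = circ_int_n r n (\<lambda>ws. circ_int r (\<lambda>z. F (swp 0 (b # z # ws))))"
      by (rule Suc.IH)
  qed
  also have "\<dots> = circ_int_n r (Suc n) (\<lambda>zs. circ_int r (\<lambda>z. F (z # zs)))"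
    by (simp add: swp_def)
  finally show ?case .
qed

lemma circ_int_contour: "circ_int r g = contour_integral (circlepath 0 r) g / (2 * pi * \<i>)"
proof -
  have "contour_integral (circlepath 0 r) g = integral {0..2*pi} (\<lambda>t. g (0 + of_real r * cis t) * of_real r * \<i> * cis t)"
    unfolding circlepath_def by (rule contour_integral_part_circlepath_eq) simp
  also have "\<dots> = integral {0..2*pi} (\<lambda>t. g (of_real r * cis t) * (\<i> * of_real r * cis t))"
    by (simp add: mult_ac)
  finally show ?thesis by (simp add: circ_int_def)
qed

lemma circ_int_CIF:
  assumes "0 < r" "r < R" "f holomorphic_on ball 0 R" "cmod w < r"
  shows "circ_int r (\<lambda>u. f u / (u - w)) = f w"
proof -
  have "f holomorphic_on cball 0 r"
    by (rule holomorphic_on_subset[OF assms(3)]) (use assms in auto)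
  from Cauchy_integral_circlepath_simple[OF this, of w] assms(4)
  have "contour_integral (circlepath 0 r) (\<lambda>u. f u / (u - w)) = 2 * of_real pi * \<i> * f w"
    using contour_integral_unique by simp
  then show ?thesis by (simp add: circ_int_contour)
qed

lemma circ_int_cauchy:
  assumes "0 < r" "r < R" "f holomorphic_on ball 0 R"
  shows "circ_int r f = 0"
proof -
  have h: "(\<lambda>u. u * f u) holomorphic_on ball 0 R"
    by (intro holomorphic_intros assms(3))
  have "circ_int r (\<lambda>u. u * f u / (u - 0)) = 0 * f 0"
    using circ_int_CIF[OF assms(1,2) h, of 0] assms by simp
  moreover have "circ_int r (\<lambda>u. u * f u / (u - 0)) = circ_int r f"
    by (rule circ_int_cong) (use assms in auto)
  ultimately show ?thesis by simp
qed

lemma circ_int_reflect: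
  assumes r: "r > 0"
  shows "circ_int r g = circ_int (1 / r) (\<lambda>w. g (1 / w) / w ^ 2)"
proof -
  define h where "h = (\<lambda>t. g (of_real r * cis t) * (\<i> * of_real r * cis t))"
  have pt: "g (1 / (of_real (1 / r) * cis t)) / (of_real (1 / r) * cis t) ^ 2 * (\<i> * of_real (1 / r) * cis t) = h (- t)" for t
  proof -
    have a: "1 / (of_real (1 / r) * cis t) = of_real r * cis (- t)"
      using r by (simp add: field_simps cis_mult)
    have b: "(of_real (1 / r) * cis t) ^ 2 = (of_real (1/r) * cis t) * (of_real (1/r) * cis t)"
      by (simp add: power2_eq_square)
    have c: "1 / (of_real (1 / r) * cis t) ^ 2 * (\<i> * of_real (1 / r) * cis t) = \<i> * (of_real r * cis (- t))"
      unfolding b using r by (simp add: field_simps cis_mult)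
    have "g (1 / (of_real (1 / r) * cis t)) / (of_real (1 / r) * cis t) ^ 2 * (\<i> * of_real (1 / r) * cis t)
        = g (1 / (of_real (1 / r) * cis t)) * (1 / (of_real (1 / r) * cis t) ^ 2 * (\<i> * of_real (1 / r) * cis t))"
      by (simp only: divide_inverse mult_ac) simp
    also have "\<dots> = h (- t)" unfolding c a h_def by (simp add: mult_ac)
    finally show ?thesis .
  qed
  have "integral {0..2*pi} (\<lambda>t. h (- t)) = integral {-(2*pi)..0} h"
    using Henstock_Kurzweil_Integration.integral_reflect_real[where a="-(2*pi)" and b=0 and f=h] by simp
  also have "\<dots> = integral {0..2*pi} (\<lambda>x. h (x + - (2*pi)))"
    using integral_shift_real_ivl[where f=h and c="-(2*pi)" and a="-(2*pi)" and b=0] by simp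
  also have "\<dots> = integral {0..2*pi} h"
  proof -
    have "cis (x - 2 * pi) = cis x" for x by (simp add: cis_divide[symmetric])
    then show ?thesis by (simp add: h_def)
  qed
  finally have "integral {0..2*pi} (\<lambda>t. h (- t)) = integral {0..2*pi} h" .
  then show ?thesis
    unfolding circ_int_def pt by (simp add: h_def)
qed

definition Af :: "real \<Rightarrow> complex \<Rightarrow> complex \<Rightarrow> complex" where
  "Af q a b = (a - b) / (a - of_real q * b - (1 - of_real q) * a * b)"

definition PA :: "real \<Rightarrow> nat \<Rightarrow> complex list \<Rightarrow> complex" where
  "PA q N zs = (\<Prod>i<N. \<Prod>j\<in>{i<..<N}. Af q (zs!i) (zs!j))"

definition TT :: "nat \<Rightarrow> complex list \<Rightarrow> complex" where
  "TT N zs = (1 - (\<Prod>i<N. zs!i)) / (\<Prod>i<N. (1 - zs!i))"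

lemma I_fun_PA: "I_fun q N zs = PA q N zs * TT N zs"
  by (simp add: I_fun_def PA_def TT_def Af_def)

locale setting =
  fixes q r :: real
  assumes q_pos: "0 < \<bar>q\<bar>" and q_lt: "\<bar>q\<bar> < 1"
    and r_pos: "0 < r" and r_lt: "r < (1 - \<bar>q\<bar>) / \<bar>1 - q\<bar>"
begin

lemma q_ne1: "q \<noteq> 1" using q_lt by auto

lemma absq1: "\<bar>1 - q\<bar> > 0" using q_ne1 by auto

lemma key: "\<bar>1 - q\<bar> * r < 1 - \<bar>q\<bar>"
  using r_lt absq1 by (simp add: field_simps)

lemma absq1_ge: "\<bar>1 - q\<bar> \<ge> 1 - \<bar>q\<bar>" by linarith

lemma r_lt1: "r < 1"
proof -
  have "(1 - \<bar>q\<bar>) / \<bar>1 - q\<bar> \<le> 1" using absq1 absq1_ge by (simp add: field_simps)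
  then show ?thesis using r_lt by linarith
qed

lemma r_ge0[simp]: "r \<ge> 0" using r_pos by simp

lemma norm_1q: "cmod (1 - complex_of_real q) = \<bar>1 - q\<bar>"
  by (metis norm_of_real of_real_1 of_real_diff)

definition "\<delta> = r * (1 - \<bar>q\<bar> - \<bar>1 - q\<bar> * r)"

lemma delta_pos: "\<delta> > 0"
  using key r_pos by (simp add: \<delta>_def)

lemma den_bound:
  assumes "cmod a = r" "cmod b = r"
  shows "cmod (a - of_real q * b - (1 - of_real q) * a * b) \<ge> \<delta>"
proof -
  have "cmod (of_real q * b + (1 - of_real q) * a * b) \<le> cmod (of_real q * b) + cmod ((1 - of_real q) * a * b)"
    by (rule norm_triangle_ineq)
  also have "\<dots> = \<bar>q\<bar> * r + \<bar>1 - q\<bar> * r * r"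
    using assms by (simp add: norm_mult norm_1q)
  finally have X: "cmod (of_real q * b + (1 - of_real q) * a * b) \<le> \<bar>q\<bar> * r + \<bar>1 - q\<bar> * r * r" .
  have "cmod a - cmod (of_real q * b + (1 - of_real q) * a * b) \<le> cmod (a - (of_real q * b + (1 - of_real q) * a * b))"
    by (rule norm_triangle_ineq2)
  then show ?thesis using X assms by (simp add: \<delta>_def algebra_simps)
qed

lemma den_ne0:
  assumes "cmod a = r" "cmod b = r"
  shows "a - of_real q * b - (1 - of_real q) * a * b \<noteq> 0"
  using den_bound[OF assms] delta_pos by auto

lemma one_minus_bound: "cmod z = r \<Longrightarrow> cmod (1 - z) \<ge> 1 - r"
  by (metis norm_one norm_triangle_ineq2)

lemma contl_Af: "i < N \<Longrightarrow> j < N \<Longrightarrow> contl r N (\<lambda>zs. Af q (zs!i) (zs!j))"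
proof -
  assume ij: "i < N" "j < N"
  have "contl r N (\<lambda>zs. zs!i - zs!j)"
    by (intro contl_diff contl_nth ij)
  moreover have "contl r N (\<lambda>zs. zs!i - of_real q * zs!j - (1 - of_real q) * zs!i * zs!j)"
    by (intro contl_diff contl_mult contl_const contl_nth ij)
  ultimately show ?thesis unfolding Af_def
    by (rule contl_divide[OF _ _ delta_pos]) (use ij in \<open>auto intro!: den_bound simp: torus_nth\<close>)
qed

lemma contl_PA: "contl r N (PA q N)"
  unfolding PA_def by (intro contl_prod contl_Af) auto

lemma prod_one_minus_bound:
  assumes "zs \<in> torus r N"
  shows "cmod (\<Prod>i<N. (1 - zs!i)) \<ge> (1 - r) ^ N"
proof -
  have "(\<Prod>i<N. (1 - r)) \<le> (\<Prod>i<N. cmod (1 - zs!i))"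
    by (rule prod_mono) (use r_lt1 one_minus_bound torus_nth[OF assms] in auto)
  then show ?thesis by (simp add: prod_norm)
qed

lemma contl_TT: "contl r N (TT N)"
proof -
  have a: "contl r N (\<lambda>zs. 1 - (\<Prod>i<N. zs!i))"
    by (intro contl_diff contl_const contl_prod contl_nth) auto
  have b: "contl r N (\<lambda>zs. \<Prod>i<N. (1 - zs!i))"
    by (intro contl_diff contl_const contl_prod contl_nth) auto
  show ?thesis unfolding TT_def
    by (rule contl_divide[OF a b, of "(1 - r) ^ N"]) (use r_lt1 prod_one_minus_bound in auto)
qed

lemma contl_I: "contl r N (I_fun q N)"
  unfolding I_fun_PA by (intro contl_mult contl_PA contl_TT)

lemma contl_eps: "i < N \<Longrightarrow> contl r N (\<lambda>zs. eps (zs!i))"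
  unfolding eps_def
  by (intro contl_diff contl_const, rule contl_divide[of _ _ _ _ r]) (auto simp: r_pos torus_nth)

lemma contl_Pw: "contl r N (\<lambda>zs. \<Prod>i<N. (zs!i) powi (e i))"
  by (intro contl_prod contl_powi_nth) (auto simp: r_pos)

end

lemma ioo_Suc: "i < M \<Longrightarrow> {i<..<Suc M} = insert M {i<..<M}"
  by auto

lemma PA_snoc:
  assumes "length ws = M"
  shows "PA q (Suc M) (ws @ [z]) = PA q M ws * (\<Prod>i<M. Af q (ws!i) z)"
proof -
  have "PA q (Suc M) (ws @ [z]) = (\<Prod>i<M. \<Prod>j\<in>{i<..<Suc M}. Af q ((ws@[z])!i) ((ws@[z])!j))"
  proof -
    have "{M<..<Suc M} = {}" by auto
    then show ?thesis by (simp add: PA_def)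
  qed
  also have "\<dots> = (\<Prod>i<M. (\<Prod>j\<in>{i<..<M}. Af q (ws!i) (ws!j)) * Af q (ws!i) z)"
  proof (rule prod.cong[OF refl])
    fix i assume i: "i \<in> {..<M}"
    have "(\<Prod>j\<in>{i<..<Suc M}. Af q ((ws@[z])!i) ((ws@[z])!j)) =
          Af q ((ws@[z])!i) ((ws@[z])!M) * (\<Prod>j\<in>{i<..<M}. Af q ((ws@[z])!i) ((ws@[z])!j))"
      using i by (simp add: ioo_Suc)
    also have "\<dots> = Af q (ws!i) z * (\<Prod>j\<in>{i<..<M}. Af q (ws!i) (ws!j))"
      using i assms by (simp add: nth_append)
    finally show "(\<Prod>j\<in>{i<..<Suc M}. Af q ((ws@[z])!i) ((ws@[z])!j)) = (\<Prod>j\<in>{i<..<M}. Af q (ws!i) (ws!j)) * Af q (ws!i) z"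
      by (simp add: mult.commute)
  qed
  also have "\<dots> = PA q M ws * (\<Prod>i<M. Af q (ws!i) z)"
    by (simp only: PA_def prod.distrib)
  finally show ?thesis .
qed

lemma ioo_Suc_image: "{Suc i<..<Suc M} = Suc ` {i<..<M}"
proof -
  have "{Suc i<..<Suc M} = {Suc (Suc i)..<Suc M}" by auto
  also have "\<dots> = Suc ` {Suc i..<M}" by simp
  also have "{Suc i..<M} = {i<..<M}" by auto
  finally show ?thesis .
qed

lemma ioo_0_Suc: "{0<..<Suc M} = Suc ` {..<M}"
proof -
  have "{0<..<Suc M} = {Suc 0..<Suc M}" by auto
  also have "\<dots> = Suc ` {0..<M}" by simp
  finally show ?thesis by (simp add: atLeast0LessThan)
qed

lemma PA_Cons:
  assumes "length ws = M"
  shows "PA q (Suc M) (z # ws) = (\<Prod>j<M. Af q z (ws!j)) * PA q M ws"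
proof -
  have "PA q (Suc M) (z # ws) = (\<Prod>j\<in>{0<..<Suc M}. Af q z ((z#ws)!j)) *
        (\<Prod>i<M. \<Prod>j\<in>{Suc i<..<Suc M}. Af q ((z#ws)!Suc i) ((z#ws)!j))"
    unfolding PA_def by (simp only: prod.lessThan_Suc_shift nth_Cons_0)
  also have "\<dots> = (\<Prod>j<M. Af q z (ws!j)) * PA q M ws"
    unfolding ioo_Suc_image ioo_0_Suc PA_def
    by (simp only: prod.reindex[OF inj_on_subset[OF inj_Suc subset_UNIV]] comp_def nth_Cons_Suc nth_Cons_0)
  finally show ?thesis .
qed

lemma TT_snoc:
  assumes "length ws = M"
  shows "TT (Suc M) (ws @ [z]) = (1 - (\<Prod>i<M. ws!i) * z) / ((\<Prod>i<M. (1 - ws!i)) * (1 - z))"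
proof -
  have a: "(\<Prod>i<M. (ws @ [z]) ! i) = (\<Prod>i<M. ws!i)" 
    by (rule prod.cong) (use assms in \<open>auto simp: nth_append\<close>)
  have b: "(\<Prod>i<M. 1 - (ws @ [z]) ! i) = (\<Prod>i<M. 1 - ws!i)"
    by (rule prod.cong) (use assms in \<open>auto simp: nth_append\<close>)
  show ?thesis unfolding TT_def using a b assms by (simp add: nth_append)
qed

lemma TT_Cons:
  shows "TT (Suc M) (z # ws) = (1 - z * (\<Prod>i<M. ws!i)) / ((1 - z) * (\<Prod>i<M. (1 - ws!i)))"
  unfolding TT_def by (simp only: prod.lessThan_Suc_shift nth_Cons_0 nth_Cons_Suc)

lemma I_fun_snoc:
  assumes "length ws = M"
  shows "I_fun q (Suc M) (ws @ [z]) = PA q M ws * (\<Prod>i<M. Af q (ws!i) z) *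
      ((1 - (\<Prod>i<M. ws!i) * z) / ((\<Prod>i<M. (1 - ws!i)) * (1 - z)))"
  by (simp add: I_fun_PA PA_snoc[OF assms] TT_snoc[OF assms])

lemma I_fun_Cons:
  assumes "length ws = M"
  shows "I_fun q (Suc M) (z # ws) = (\<Prod>j<M. Af q z (ws!j)) * PA q M ws *
      ((1 - z * (\<Prod>i<M. ws!i)) / ((1 - z) * (\<Prod>i<M. (1 - ws!i))))"
  by (simp add: I_fun_PA PA_Cons[OF assms] TT_Cons)

lemma circ_int_n_zero: "circ_int_n r n (\<lambda>_. 0) = 0"
  using circ_int_n_mult[of r n 0 "\<lambda>_. 0"] by simp

lemma prod_snoc_nth:
  assumes "length ws = M"
  shows "(\<Prod>i<Suc M. f i ((ws @ [z]) ! i)) = (\<Prod>i<M. f i (ws ! i)) * f M z"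
proof -
  have "(\<Prod>i<M. f i ((ws @ [z]) ! i)) = (\<Prod>i<M. f i (ws ! i))"
    by (rule prod.cong) (use assms in \<open>auto simp: nth_append\<close>)
  then show ?thesis using assms by (simp add: nth_append)
qed

context setting
begin

definition V :: "int \<Rightarrow> nat \<Rightarrow> int list \<Rightarrow> complex" where
  "V x M ys = circ_int_n r M (\<lambda>zs. I_fun q M zs * (\<Prod>i<M. (zs!i) powi (x - ys!i - 1)))"

definition "R0 = min 1 (r / (\<bar>q\<bar> + \<bar>1 - q\<bar> * r))"

lemma R0_gt: "r < R0"
proof -
  have d: "\<bar>q\<bar> + \<bar>1 - q\<bar> * r < 1" using key by linarith
  have p: "\<bar>q\<bar> + \<bar>1 - q\<bar> * r > 0" using q_pos absq1 r_pos by (simp add: add_pos_nonneg)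
  have "r * (\<bar>q\<bar> + \<bar>1 - q\<bar> * r) < r * 1" by (rule mult_strict_left_mono[OF d r_pos])
  then have "r < r / (\<bar>q\<bar> + \<bar>1 - q\<bar> * r)" using p by (simp add: less_divide_eq)
  then show ?thesis using r_lt1 by (simp add: R0_def)
qed

lemma den_inner:
  assumes w: "cmod w = r" and z: "cmod z < R0"
  shows "w - of_real q * z - (1 - of_real q) * w * z \<noteq> 0"
proof
  assume h: "w - of_real q * z - (1 - of_real q) * w * z = 0"
  have p: "\<bar>q\<bar> + \<bar>1 - q\<bar> * r > 0" using q_pos absq1 r_pos by (simp add: add_pos_nonneg)
  have e: "w = z * (of_real q + (1 - of_real q) * w)"
  proof -
    have "w - z * (of_real q + (1 - of_real q) * w) = w - of_real q * z - (1 - of_real q) * w * z"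
      by (simp add: algebra_simps)
    then show ?thesis using h by simp
  qed
  have "cmod w = cmod (z * (of_real q + (1 - of_real q) * w))" by (rule arg_cong[OF e])
  also have "\<dots> \<le> cmod z * (\<bar>q\<bar> + \<bar>1 - q\<bar> * r)"
    unfolding norm_mult
    by (rule mult_left_mono) (use w norm_triangle_ineq[of "of_real q" "(1 - of_real q) * w"] in \<open>auto simp: norm_mult norm_1q\<close>)
  also have "\<dots> < R0 * (\<bar>q\<bar> + \<bar>1 - q\<bar> * r)"
    using z p by (simp add: mult_strict_right_mono)
  also have "\<dots> \<le> r"
  proof -
    have "R0 \<le> r / (\<bar>q\<bar> + \<bar>1 - q\<bar> * r)" by (simp add: R0_def)
    from mult_right_mono[OF this less_imp_le[OF p]] show ?thesis using p by simp
  qed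
  finally show False using w by simp
qed

lemma one_minus_ne0: "cmod z < R0 \<Longrightarrow> 1 - z \<noteq> 0"
  by (auto simp: R0_def)

lemma prod_one_minus_ne0: "ws \<in> torus r M \<Longrightarrow> (\<Prod>i<M. (1 - ws!i)) \<noteq> 0"
  by (subst prod_zero_iff) (use r_lt1 torus_nth[of ws r M] in force)+

lemma contl_integrand: "contl r M (\<lambda>zs. I_fun q M zs * (\<Prod>i<M. (zs!i) powi (e i)))"
  by (intro contl_mult contl_I contl_Pw)

lemma V_last_lt:
  assumes len: "length ys = Suc M" and lt: "ys ! M < x"
  shows "V x (Suc M) ys = 0"
proof -
  have "V x (Suc M) ys = circ_int_n r M (\<lambda>ws. circ_int r (\<lambda>z. I_fun q (Suc M) (ws @ [z]) *
          (\<Prod>i<Suc M. ((ws @ [z]) ! i) powi (x - ys!i - 1))))"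
    unfolding V_def by (rule circ_int_n_snoc)
  also have "\<dots> = circ_int_n r M (\<lambda>_. 0)"
  proof (rule circ_int_n_cong[OF r_ge0])
    fix ws assume ws: "ws \<in> torus r M"
    have lw: "length ws = M" using torus_length[OF ws] .
    define C where "C = (\<Prod>i<M. (ws ! i) powi (x - ys!i - 1))"
    have eq: "I_fun q (Suc M) (ws @ [z]) * (\<Prod>i<Suc M. ((ws @ [z]) ! i) powi (x - ys!i - 1)) =
          PA q M ws * (\<Prod>i<M. Af q (ws!i) z) * ((1 - (\<Prod>i<M. ws!i) * z) / ((\<Prod>i<M. (1 - ws!i)) * (1 - z)))
          * (C * z powi (x - ys!M - 1))" for z
      unfolding I_fun_snoc[OF lw] C_def prod_snoc_nth[OF lw, where f="\<lambda>i w. w powi (x - ys!i - 1)"] ..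
    have "circ_int r (\<lambda>z. PA q M ws * (\<Prod>i<M. Af q (ws!i) z) * ((1 - (\<Prod>i<M. ws!i) * z) / ((\<Prod>i<M. (1 - ws!i)) * (1 - z)))
          * (C * z powi (x - ys!M - 1))) = 0"
    proof (rule circ_int_cauchy[OF r_pos R0_gt])
      show "(\<lambda>z. PA q M ws * (\<Prod>i<M. Af q (ws!i) z) * ((1 - (\<Prod>i<M. ws!i) * z) / ((\<Prod>i<M. (1 - ws!i)) * (1 - z)))
          * (C * z powi (x - ys!M - 1))) holomorphic_on ball 0 R0"
        unfolding Af_def
        using lt den_inner[OF torus_nth[OF ws]] prod_one_minus_ne0[OF ws] one_minus_ne0
        by (intro holomorphic_intros) auto
    qed
    then show "circ_int r (\<lambda>z. I_fun q (Suc M) (ws @ [z]) * (\<Prod>i<Suc M. ((ws @ [z]) ! i) powi (x - ys!i - 1))) = 0"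
      unfolding eq .
  qed
  also have "\<dots> = 0" by (rule circ_int_n_zero)
  finally show ?thesis .
qed

lemma Af_zero: "w \<noteq> 0 \<Longrightarrow> Af q w 0 = 1"
  by (simp add: Af_def)

lemma W_one: "circ_int_n r M (\<lambda>ws. PA q M ws / (\<Prod>i<M. (1 - ws!i)) * (\<Prod>i<M. (ws!i) powi (-1))) = 1"
proof (induction M)
  case 0 then show ?case by (simp add: PA_def)
next
  case (Suc M)
  have "circ_int_n r (Suc M) (\<lambda>ws. PA q (Suc M) ws / (\<Prod>i<Suc M. (1 - ws!i)) * (\<Prod>i<Suc M. (ws!i) powi (-1)))
     = circ_int_n r M (\<lambda>ws. circ_int r (\<lambda>z. PA q (Suc M) (ws @ [z]) / (\<Prod>i<Suc M. (1 - (ws @ [z])!i)) *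
           (\<Prod>i<Suc M. ((ws @ [z])!i) powi (-1))))"
    by (rule circ_int_n_snoc)
  also have "\<dots> = circ_int_n r M (\<lambda>ws. PA q M ws / (\<Prod>i<M. (1 - ws!i)) * (\<Prod>i<M. (ws!i) powi (-1)))"
  proof (rule circ_int_n_cong[OF r_ge0])
    fix ws assume ws: "ws \<in> torus r M"
    have lw: "length ws = M" using torus_length[OF ws] .
    have nz: "\<And>i. i < M \<Longrightarrow> ws!i \<noteq> 0" using torus_nth[OF ws] r_pos by force
    define C where "C = PA q M ws / (\<Prod>i<M. (1 - ws!i)) * (\<Prod>i<M. (ws!i) powi (-1))"
    define g where "g = (\<lambda>z. C * ((\<Prod>i<M. Af q (ws!i) z) / (1 - z)))"
    have eq: "PA q (Suc M) (ws @ [z]) / (\<Prod>i<Suc M. (1 - (ws @ [z])!i)) * (\<Prod>i<Suc M. ((ws @ [z])!i) powi (-1))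
        = g z / (z - 0)" if "cmod z = r" for z
    proof -
      have z0: "z \<noteq> 0" using that r_pos by auto
      have a: "(\<Prod>i<Suc M. (1 - (ws @ [z])!i)) = (\<Prod>i<M. (1 - ws!i)) * (1 - z)"
        using prod_snoc_nth[OF lw, where f="\<lambda>i w. 1 - w"] by simp
      have b: "(\<Prod>i<Suc M. ((ws @ [z])!i) powi (-1)) = (\<Prod>i<M. (ws!i) powi (-1)) * z powi (-1)"
        using prod_snoc_nth[OF lw, where f="\<lambda>i w. w powi (-1)"] by simp
      show ?thesis unfolding a b PA_snoc[OF lw] g_def C_def using z0
        by (simp add: field_simps)
    qed
    have "circ_int r (\<lambda>z. g z / (z - 0)) = g 0"
    proof (rule circ_int_CIF[OF r_pos R0_gt])
      show "g holomorphic_on ball 0 R0"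
        unfolding g_def Af_def
        using den_inner[OF torus_nth[OF ws]] one_minus_ne0 nz
        by (intro holomorphic_intros) auto
    qed (use r_pos in auto)
    also have "g 0 = C"
    proof -
      have "(\<Prod>i<M. Af q (ws!i) 0) = 1"
        by (rule prod.neutral) (use nz in \<open>auto intro!: Af_zero\<close>)
      then show ?thesis by (simp add: g_def)
    qed
    finally have "circ_int r (\<lambda>z. g z / (z - 0)) = C" .
    moreover have "circ_int r (\<lambda>z. PA q (Suc M) (ws @ [z]) / (\<Prod>i<Suc M. (1 - (ws @ [z])!i)) * (\<Prod>i<Suc M. ((ws @ [z])!i) powi (-1)))
        = circ_int r (\<lambda>z. g z / (z - 0))"
      by (rule circ_int_cong[OF r_ge0]) (use eq in auto)
    ultimately show "circ_int r (\<lambda>z. PA q (Suc M) (ws @ [z]) / (\<Prod>i<Suc M. (1 - (ws @ [z])!i)) * (\<Prod>i<Suc M. ((ws @ [z])!i) powi (-1)))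
        = PA q M ws / (\<Prod>i<M. (1 - ws!i)) * (\<Prod>i<M. (ws!i) powi (-1))"
      by (simp add: C_def)
  qed
  also have "\<dots> = 1" by (rule Suc.IH)
  finally show ?case .
qed

lemma V_all_eq:
  assumes len: "length ys = Suc M" and eq: "\<And>i. i < Suc M \<Longrightarrow> ys ! i = x"
  shows "V x (Suc M) ys = 1"
proof -
  have "V x (Suc M) ys = circ_int_n r (Suc M) (\<lambda>zs. I_fun q (Suc M) zs * (\<Prod>i<Suc M. (zs!i) powi (-1)))"
    unfolding V_def by (rule circ_int_n_cong[OF r_ge0]) (use eq in simp)
  also have "\<dots> = circ_int_n r M (\<lambda>ws. circ_int r (\<lambda>z. I_fun q (Suc M) (ws @ [z]) *
          (\<Prod>i<Suc M. ((ws @ [z]) ! i) powi (-1))))"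
    by (rule circ_int_n_snoc)
  also have "\<dots> = circ_int_n r M (\<lambda>ws. PA q M ws / (\<Prod>i<M. (1 - ws!i)) * (\<Prod>i<M. (ws!i) powi (-1)))"
  proof (rule circ_int_n_cong[OF r_ge0])
    fix ws assume ws: "ws \<in> torus r M"
    have lw: "length ws = M" using torus_length[OF ws] .
    have nz: "\<And>i. i < M \<Longrightarrow> ws!i \<noteq> 0" using torus_nth[OF ws] r_pos by force
    define C where "C = (\<Prod>i<M. (ws!i) powi (-1))"
    define g where "g = (\<lambda>z. PA q M ws * (\<Prod>i<M. Af q (ws!i) z) * ((1 - (\<Prod>i<M. ws!i) * z) / ((\<Prod>i<M. (1 - ws!i)) * (1 - z))) * C)"
    have eqz: "I_fun q (Suc M) (ws @ [z]) * (\<Prod>i<Suc M. ((ws @ [z]) ! i) powi (-1)) = g z / (z - 0)" if "cmod z = r" for z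
    proof -
      have z0: "z \<noteq> 0" using that r_pos by auto
      have b: "(\<Prod>i<Suc M. ((ws @ [z])!i) powi (-1)) = C * z powi (-1)"
        using prod_snoc_nth[OF lw, where f="\<lambda>i w. w powi (-1)"] by (simp add: C_def)
      show ?thesis unfolding b I_fun_snoc[OF lw] g_def using z0
        by (simp add: field_simps)
    qed
    have "circ_int r (\<lambda>z. g z / (z - 0)) = g 0"
    proof (rule circ_int_CIF[OF r_pos R0_gt])
      show "g holomorphic_on ball 0 R0"
        unfolding g_def Af_def
        using den_inner[OF torus_nth[OF ws]] one_minus_ne0 prod_one_minus_ne0[OF ws] nz
        by (intro holomorphic_intros) auto
    qed (use r_pos in auto)
    also have "g 0 = PA q M ws / (\<Prod>i<M. (1 - ws!i)) * C"
    proof -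
      have "(\<Prod>i<M. Af q (ws!i) 0) = 1"
        by (rule prod.neutral) (use nz in \<open>auto intro!: Af_zero\<close>)
      then show ?thesis by (simp add: g_def)
    qed
    finally have "circ_int r (\<lambda>z. g z / (z - 0)) = PA q M ws / (\<Prod>i<M. (1 - ws!i)) * C" .
    moreover have "circ_int r (\<lambda>z. I_fun q (Suc M) (ws @ [z]) * (\<Prod>i<Suc M. ((ws @ [z]) ! i) powi (-1)))
        = circ_int r (\<lambda>z. g z / (z - 0))"
      by (rule circ_int_cong[OF r_ge0]) (use eqz in auto)
    ultimately show "circ_int r (\<lambda>z. I_fun q (Suc M) (ws @ [z]) * (\<Prod>i<Suc M. ((ws @ [z]) ! i) powi (-1)))
        = PA q M ws / (\<Prod>i<M. (1 - ws!i)) * (\<Prod>i<M. (ws!i) powi (-1))"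
      by (simp add: C_def)
  qed
  also have "\<dots> = 1" by (rule W_one)
  finally show ?thesis .
qed

end

context setting
begin

definition At :: "complex \<Rightarrow> complex \<Rightarrow> complex" where
  "At u w = (1 - u * w) / (1 - (1 - of_real q) * w - of_real q * w * u)"

definition "R1 = (1 - \<bar>1 - q\<bar> * r) / (\<bar>q\<bar> * r)"

lemma R1_gt: "1 / r < R1"
proof -
  have "\<bar>q\<bar> * r > 0" using q_pos r_pos by simp
  moreover have "\<bar>q\<bar> < 1 - \<bar>1 - q\<bar> * r" using key by linarith
  ultimately show ?thesis using r_pos by (simp add: R1_def field_simps)
qed

lemma den_outer:
  assumes w: "cmod w = r" and u: "cmod u < R1"
  shows "1 - (1 - of_real q) * w - of_real q * w * u \<noteq> 0"
proof
  assume h: "1 - (1 - of_real q) * w - of_real q * w * u = 0"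
  have qr: "\<bar>q\<bar> * r > 0" using q_pos r_pos by simp
  have "1 - \<bar>1 - q\<bar> * r \<le> cmod (1 - (1 - of_real q) * w)"
    using norm_triangle_ineq2[of 1 "(1 - of_real q) * w"] w by (simp add: norm_mult norm_1q)
  also have "1 - (1 - of_real q) * w = of_real q * w * u" using h by (simp add: algebra_simps)
  also have "cmod (of_real q * w * u) = \<bar>q\<bar> * r * cmod u" using w by (simp add: norm_mult)
  also have "\<dots> < \<bar>q\<bar> * r * R1" by (rule mult_strict_left_mono[OF u qr])
  also have "\<dots> = 1 - \<bar>1 - q\<bar> * r" using q_pos r_pos by (simp add: R1_def)
  finally show False by simp
qed

lemma Af_inv:
  assumes w: "cmod w = r" and u: "cmod u = 1 / r"
  shows "Af q (1 / u) w = At u w"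
proof -
  have u0: "u \<noteq> 0" using u r_pos by auto
  have D: "1 - (1 - of_real q) * w - of_real q * w * u \<noteq> 0"
    using den_outer[OF w] u R1_gt by simp
  have a: "1 / u - w = (1 - u * w) / u" using u0 by (simp add: field_simps)
  have b: "1 / u - of_real q * w - (1 - of_real q) * (1 / u) * w = (1 - (1 - of_real q) * w - of_real q * w * u) / u"
    using u0 by (simp add: field_simps)
  show ?thesis unfolding Af_def At_def a b using u0 D by simp
qed

lemma At_one: "cmod w = r \<Longrightarrow> At 1 w = 1"
proof -
  assume w: "cmod w = r"
  have "w \<noteq> 1" using w r_lt1 by auto
  moreover have den: "1 - (1 - of_real q) * w - of_real q * w * 1 = 1 - w" by (simp add: algebra_simps)
  ultimately show ?thesis by (simp only: At_def den) simp
qed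

lemma powi_inv_neg:
  fixes u :: complex
  assumes "e \<le> -2" "u \<noteq> 0"
  shows "(1 / u) powi e / u ^ 2 = u ^ nat (- e - 2)"
proof -
  have "(1 / u) powi e = u ^ nat (- e)"
  proof -
    have iu: "inverse (1 / u) = u" by simp
    show ?thesis using assms by (simp add: power_int_def iu)
  qed
  moreover have "nat (- e) = nat (- e - 2) + 2" using assms by simp
  ultimately show ?thesis using assms by (simp add: power_add power2_eq_square)
qed

lemma K1:
  assumes ws: "ws \<in> torus r M" and e: "e \<le> -2"
  shows "circ_int r (\<lambda>z. I_fun q (Suc M) (z # ws) * z powi e) = I_fun q M ws"
proof -
  have lw: "length ws = M" using torus_length[OF ws] .
  define P where "P = (\<Prod>i<M. ws!i)"
  define D0 where "D0 = (\<Prod>i<M. (1 - ws!i))"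
  have D0: "D0 \<noteq> 0" unfolding D0_def by (rule prod_one_minus_ne0[OF ws])
  define \<phi> where "\<phi> = (\<lambda>u. (\<Prod>j<M. At u (ws!j)) * PA q M ws * ((u - P) / D0) * u ^ nat (- e - 2))"
  have eq: "I_fun q (Suc M) ((1 / u) # ws) * (1 / u) powi e / u ^ 2 = \<phi> u / (u - 1)" if u: "cmod u = 1 / r" for u
  proof -
    have u0: "u \<noteq> 0" using u r_pos by auto
    have u1: "u \<noteq> 1" using u r_pos r_lt1 by (auto simp: field_simps)
    have pA: "(\<Prod>j<M. Af q (1 / u) (ws!j)) = (\<Prod>j<M. At u (ws!j))"
      by (rule prod.cong[OF refl]) (use Af_inv torus_nth[OF ws] u in auto)
    have t: "(1 - 1 / u * P) / ((1 - 1 / u) * D0) = (u - P) / ((u - 1) * D0)"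
      using u0 u1 D0 by (simp add: field_simps)
    have "I_fun q (Suc M) ((1 / u) # ws) * (1 / u) powi e / u ^ 2 =
          (\<Prod>j<M. At u (ws!j)) * PA q M ws * ((u - P) / ((u - 1) * D0)) * ((1 / u) powi e / u ^ 2)"
      unfolding I_fun_Cons[OF lw] pA P_def[symmetric] D0_def[symmetric] t by simp
    also have "\<dots> = \<phi> u / (u - 1)"
      unfolding powi_inv_neg[OF e u0] \<phi>_def using u1 D0 by (simp add: field_simps)
    finally show ?thesis .
  qed
  have "circ_int r (\<lambda>z. I_fun q (Suc M) (z # ws) * z powi e) =
        circ_int (1 / r) (\<lambda>u. I_fun q (Suc M) ((1 / u) # ws) * (1 / u) powi e / u ^ 2)"
    by (rule circ_int_reflect[OF r_pos])
  also have "\<dots> = circ_int (1 / r) (\<lambda>u. \<phi> u / (u - 1))"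
    by (rule circ_int_cong) (use eq r_pos in auto)
  also have "\<dots> = \<phi> 1"
  proof (rule circ_int_CIF[OF _ R1_gt])
    show "0 < 1 / r" using r_pos by simp
    show "cmod 1 < 1 / r" using r_pos r_lt1 by (simp add: field_simps)
    show "\<phi> holomorphic_on ball 0 R1"
      unfolding \<phi>_def At_def using den_outer[OF torus_nth[OF ws]] D0
      by (intro holomorphic_intros) auto
  qed
  also have "\<phi> 1 = PA q M ws * ((1 - P) / D0)"
  proof -
    have "(\<Prod>j<M. At 1 (ws!j)) = 1"
      by (rule prod.neutral) (use At_one torus_nth[OF ws] in auto)
    then show ?thesis by (simp add: \<phi>_def)
  qed
  also have "\<dots> = I_fun q M ws"
    by (simp add: I_fun_PA TT_def P_def D0_def)
  finally show ?thesis .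
qed

lemma V_first_gt:
  assumes len: "length ys = M" and gt: "x < y"
  shows "V x (Suc M) (y # ys) = V x M ys"
proof -
  have "V x (Suc M) (y # ys) = circ_int_n r M (\<lambda>ws. circ_int r (\<lambda>z. I_fun q (Suc M) (z # ws) *
        (\<Prod>i<Suc M. ((z # ws)!i) powi (x - (y # ys)!i - 1))))"
    unfolding V_def by (rule circ_int_n_rot[OF contl_integrand r_ge0])
  also have "\<dots> = circ_int_n r M (\<lambda>ws. I_fun q M ws * (\<Prod>i<M. (ws!i) powi (x - ys!i - 1)))"
  proof (rule circ_int_n_cong[OF r_ge0])
    fix ws assume ws: "ws \<in> torus r M"
    define C where "C = (\<Prod>i<M. (ws!i) powi (x - ys!i - 1))"
    have "circ_int r (\<lambda>z. I_fun q (Suc M) (z # ws) * (\<Prod>i<Suc M. ((z # ws)!i) powi (x - (y # ys)!i - 1)))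
        = circ_int r (\<lambda>z. C * (I_fun q (Suc M) (z # ws) * z powi (x - y - 1)))"
    proof (rule circ_int_cong[OF r_ge0])
      fix z :: complex
      have "(\<Prod>i<Suc M. ((z # ws)!i) powi (x - (y # ys)!i - 1)) = z powi (x - y - 1) * C"
        by (simp only: prod.lessThan_Suc_shift nth_Cons_0 nth_Cons_Suc C_def)
      then show "I_fun q (Suc M) (z # ws) * (\<Prod>i<Suc M. ((z # ws)!i) powi (x - (y # ys)!i - 1)) =
          C * (I_fun q (Suc M) (z # ws) * z powi (x - y - 1))" by (simp add: mult_ac)
    qed
    also have "\<dots> = C * I_fun q M ws"
    proof -
      have e: "x - y - 1 \<le> -2" using gt by simp
      show ?thesis unfolding circ_int_mult K1[OF ws e] ..
    qed
    finally show "circ_int r (\<lambda>z. I_fun q (Suc M) (z # ws) * (\<Prod>i<Suc M. ((z # ws)!i) powi (x - (y # ys)!i - 1)))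
        = I_fun q M ws * (\<Prod>i<M. (ws!i) powi (x - ys!i - 1))"
      by (simp add: C_def mult.commute)
  qed
  also have "\<dots> = V x M ys" by (simp add: V_def)
  finally show ?thesis .
qed

lemma V_nil: "V x 0 [] = 0"
  by (simp add: V_def I_fun_def)

lemma V_init:
  assumes "sorted_wrt (\<ge>) ys"
  shows "V x (length ys) ys = (if ys \<noteq> [] \<and> last ys = x then 1 else 0)"
  using assms
proof (induction ys)
  case Nil then show ?case by (simp add: V_nil)
next
  case (Cons y ys)
  define M where "M = length ys"
  have sw: "sorted_wrt (\<ge>) ys" using Cons.prems by simp
  show ?case
  proof (cases "x < y")
    case True
    have "V x (length (y # ys)) (y # ys) = V x M ys"
      using V_first_gt[OF M_def[symmetric] True] by (simp add: M_def)
    also have "\<dots> = (if ys \<noteq> [] \<and> last ys = x then 1 else 0)"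
      using Cons.IH[OF sw] by (simp add: M_def)
    finally show ?thesis using True by auto
  next
    case False
    have lastn: "last (y # ys) = (y # ys) ! M" by (simp add: M_def last_conv_nth)
    have sortn: "\<And>i j. i < j \<Longrightarrow> j < Suc M \<Longrightarrow> (y # ys) ! j \<le> (y # ys) ! i"
      using Cons.prems unfolding sorted_wrt_iff_nth_less by (simp add: M_def)
    show ?thesis
    proof (cases "(y # ys) ! M < x")
      case True
      then show ?thesis using V_last_lt[of "y # ys" M x] lastn by (simp add: M_def)
    next
      case F2: False
      have all: "(y # ys) ! i = x" if "i < Suc M" for i
      proof -
        have "(y # ys) ! M \<le> (y # ys) ! i"
          using sortn[of i M] that by (cases "i = M") auto
        moreover have "(y # ys) ! i \<le> y"
          using sortn[of 0 i] that by (cases i) auto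
        ultimately show ?thesis using F2 False by simp
      qed
      have "V x (Suc M) (y # ys) = 1" by (rule V_all_eq) (use all in \<open>auto simp: M_def\<close>)
      then show ?thesis using all[of M] lastn by (simp add: M_def)
    qed
  qed
qed

end

definition tau :: "nat \<Rightarrow> nat \<Rightarrow> nat" where
  "tau i k = (if k = i then Suc i else if k = Suc i then i else k)"

lemma tau_tau[simp]: "tau i (tau i k) = k"
  by (simp add: tau_def)

lemma tau_lt: "k < N \<Longrightarrow> Suc i < N \<Longrightarrow> tau i k < N"
  by (simp add: tau_def)

lemma bij_tau: "Suc i < N \<Longrightarrow> bij_betw (tau i) {..<N} {..<N}"
  by (rule bij_betw_byWitness[of _ "tau i"]) (auto simp: tau_lt)

lemma nth_swp_tau: "k < length zs \<Longrightarrow> Suc i < length zs \<Longrightarrow> swp i zs ! k = zs ! tau i k"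
  by (simp add: nth_swp tau_def)

lemma prod_swp:
  assumes "length zs = N" "Suc i < N"
  shows "(\<Prod>k<N. f k (swp i zs ! k)) = (\<Prod>k<N. f (tau i k) (zs ! k))"
proof -
  have "(\<Prod>k<N. f k (swp i zs ! k)) = (\<Prod>k<N. f (tau i (tau i k)) (zs ! tau i k))"
    by (rule prod.cong) (use assms in \<open>auto simp: nth_swp_tau\<close>)
  also have "\<dots> = (\<Prod>k<N. f (tau i k) (zs ! k))"
    using prod.reindex_bij_betw[OF bij_tau[OF assms(2)], of "\<lambda>k. f (tau i k) (zs ! k)"] by simp
  finally show ?thesis .
qed

lemma sum_swp:
  assumes "length zs = N" "Suc i < N"
  shows "(\<Sum>k<N. f (swp i zs ! k)) = (\<Sum>k<N. f (zs ! k))"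
proof -
  have "(\<Sum>k<N. f (swp i zs ! k)) = (\<Sum>k<N. f (zs ! tau i k))"
    by (rule sum.cong) (use assms in \<open>auto simp: nth_swp_tau\<close>)
  also have "\<dots> = (\<Sum>k<N. f (zs ! k))"
    using sum.reindex_bij_betw[OF bij_tau[OF assms(2)], of "\<lambda>k. f (zs ! k)"] by simp
  finally show ?thesis .
qed

definition Pairs :: "nat \<Rightarrow> (nat \<times> nat) set" where
  "Pairs N = Sigma {..<N} (\<lambda>i. {i<..<N})"

lemma finite_Pairs[simp]: "finite (Pairs N)"
  by (simp add: Pairs_def)

lemma PA_pairs: "PA q N zs = (\<Prod>p\<in>Pairs N. Af q (zs ! fst p) (zs ! snd p))"
  unfolding PA_def Pairs_def by (subst prod.Sigma) (auto simp: case_prod_beta)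

definition PQ :: "real \<Rightarrow> nat \<Rightarrow> nat \<Rightarrow> complex list \<Rightarrow> complex" where
  "PQ q N i zs = (\<Prod>p\<in>Pairs N - {(i, Suc i)}. Af q (zs ! fst p) (zs ! snd p))"

lemma PA_split:
  assumes "Suc i < N"
  shows "PA q N zs = Af q (zs ! i) (zs ! Suc i) * PQ q N i zs"
proof -
  have "(i, Suc i) \<in> Pairs N" using assms by (simp add: Pairs_def)
  then show ?thesis unfolding PA_pairs PQ_def by (subst prod.remove) auto
qed

definition tau2 :: "nat \<Rightarrow> nat \<times> nat \<Rightarrow> nat \<times> nat" where
  "tau2 i p = (tau i (fst p), tau i (snd p))"

lemma tau2_maps:
  assumes "p \<in> Pairs N - {(i, Suc i)}" "Suc i < N"
  shows "tau2 i p \<in> Pairs N - {(i, Suc i)}"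
  using assms by (cases p) (auto simp: Pairs_def tau2_def tau_def)

lemma tau2_tau2[simp]: "tau2 i (tau2 i p) = p"
  by (simp add: tau2_def)

lemma tau2_image:
  assumes "Suc i < N"
  shows "tau2 i ` (Pairs N - {(i, Suc i)}) = Pairs N - {(i, Suc i)}"
proof
  show "tau2 i ` (Pairs N - {(i, Suc i)}) \<subseteq> Pairs N - {(i, Suc i)}"
  proof (rule image_subsetI)
    fix p assume "p \<in> Pairs N - {(i, Suc i)}"
    then show "tau2 i p \<in> Pairs N - {(i, Suc i)}" by (rule tau2_maps[OF _ assms])
  qed
  show "Pairs N - {(i, Suc i)} \<subseteq> tau2 i ` (Pairs N - {(i, Suc i)})"
  proof
    fix p assume p: "p \<in> Pairs N - {(i, Suc i)}"
    then have "tau2 i p \<in> Pairs N - {(i, Suc i)}" by (rule tau2_maps[OF _ assms])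
    then show "p \<in> tau2 i ` (Pairs N - {(i, Suc i)})"
      by (metis image_eqI tau2_tau2)
  qed
qed

lemma PQ_swp:
  assumes "length zs = N" "Suc i < N"
  shows "PQ q N i (swp i zs) = PQ q N i zs"
proof -
  have "PQ q N i (swp i zs) = (\<Prod>p\<in>Pairs N - {(i, Suc i)}. Af q (zs ! fst (tau2 i p)) (zs ! snd (tau2 i p)))"
    unfolding PQ_def
    by (rule prod.cong[OF refl]) (use assms in \<open>auto simp: Pairs_def nth_swp_tau tau2_def\<close>)
  also have "\<dots> = (\<Prod>p\<in>tau2 i ` (Pairs N - {(i, Suc i)}). Af q (zs ! fst p) (zs ! snd p))"
    by (rule prod.reindex[symmetric, unfolded comp_def]) (metis inj_on_inverseI tau2_tau2)
  also have "\<dots> = PQ q N i zs" unfolding tau2_image[OF assms(2)] PQ_def ..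
  finally show ?thesis .
qed

lemma TT_swp:
  assumes "length zs = N" "Suc i < N"
  shows "TT N (swp i zs) = TT N zs"
  unfolding TT_def using prod_swp[OF assms, of "\<lambda>k z. z"] prod_swp[OF assms, of "\<lambda>k z. 1 - z"] by simp

context setting
begin

lemma eps_identity:
  assumes a: "cmod a = r" and b: "cmod b = r"
  shows "Af q a b * (eps b - of_real q * eps a) = eps b - eps a"
proof -
  have a0: "a \<noteq> 0" and b0: "b \<noteq> 0" using a b r_pos by auto
  define D where "D = a - of_real q * b - (1 - of_real q) * a * b"
  have d: "D \<noteq> 0" unfolding D_def by (rule den_ne0[OF a b])
  have e1: "eps b - of_real q * eps a = D / (a * b)"
    using a0 b0 by (simp add: eps_def D_def field_simps)
  have "Af q a b * (eps b - of_real q * eps a) = (a - b) / D * (D / (a * b))"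
    unfolding Af_def e1 D_def ..
  also have "\<dots> = (a - b) / (a * b)" using d a0 b0 by (simp add: field_simps)
  also have "\<dots> = eps b - eps a" using a0 b0 by (simp add: eps_def field_simps)
  finally show ?thesis .
qed

definition EE :: "nat \<Rightarrow> complex list \<Rightarrow> complex" where
  "EE N zs = (\<Sum>i<N. eps (zs ! i))"

definition Fn :: "int \<Rightarrow> nat \<Rightarrow> int list \<Rightarrow> complex list \<Rightarrow> complex" where
  "Fn x n ys zs = I_fun q (length ys) zs * (\<Prod>i<length ys. (zs!i) powi (x - ys!i - 1)) * EE (length ys) zs ^ n"

definition U :: "int \<Rightarrow> nat \<Rightarrow> int list \<Rightarrow> complex" where
  "U x n ys = circ_int_n r (length ys) (Fn x n ys)"

definition Jc :: "int \<Rightarrow> nat \<Rightarrow> int list \<Rightarrow> nat \<Rightarrow> complex" where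
  "Jc x n ys i = circ_int_n r (length ys) (\<lambda>zs. Fn x n ys zs * eps (zs ! i))"

lemma contl_EE: "contl r N (EE N)"
  unfolding EE_def by (intro contl_sum contl_eps) auto

lemma contl_Fn: "contl r (length ys) (Fn x n ys)"
  unfolding Fn_def by (intro contl_mult contl_I contl_Pw contl_power contl_EE)

lemma U_Suc: "U x (Suc n) ys = (\<Sum>i<length ys. Jc x n ys i)"
proof -
  have "U x (Suc n) ys = circ_int_n r (length ys) (\<lambda>zs. \<Sum>i<length ys. Fn x n ys zs * eps (zs ! i))"
    unfolding U_def
  proof (rule circ_int_n_cong[OF r_ge0])
    fix zs
    have "Fn x (Suc n) ys zs = Fn x n ys zs * EE (length ys) zs" by (simp add: Fn_def mult_ac)
    then show "Fn x (Suc n) ys zs = (\<Sum>i<length ys. Fn x n ys zs * eps (zs ! i))"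
      by (simp add: EE_def sum_distrib_left)
  qed
  also have "\<dots> = (\<Sum>i<length ys. Jc x n ys i)"
    unfolding Jc_def by (rule circ_int_n_sum) (auto intro!: contl_mult contl_Fn contl_eps)
  finally show ?thesis .
qed

lemma J_shift:
  assumes i: "i < length ys"
  shows "Jc x n ys i = U x n (ys[i := ys ! i + 1]) - U x n ys"
proof -
  define N where "N = length ys"
  have "Jc x n ys i = circ_int_n r N (\<lambda>zs. Fn x n (ys[i := ys ! i + 1]) zs - Fn x n ys zs)"
    unfolding Jc_def N_def[symmetric]
  proof (rule circ_int_n_cong[OF r_ge0])
    fix zs assume zs: "zs \<in> torus r N"
    have z0: "zs ! i \<noteq> 0" using torus_nth[OF zs, of i] i r_pos by (auto simp: N_def)
    define C where "C = (\<Prod>k\<in>{..<N} - {i}. (zs!k) powi (x - ys!k - 1))"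
    have a: "(\<Prod>k<N. (zs!k) powi (x - ys!k - 1)) = (zs!i) powi (x - ys!i - 1) * C"
      unfolding C_def by (subst prod.remove[of _ i]) (use i in \<open>auto simp: N_def\<close>)
    have "(\<Prod>k<N. (zs!k) powi (x - ys[i := ys ! i + 1]!k - 1)) =
          (zs!i) powi (x - (ys ! i + 1) - 1) * (\<Prod>k\<in>{..<N} - {i}. (zs!k) powi (x - ys[i := ys ! i + 1]!k - 1))"
      by (subst prod.remove[of _ i]) (use i in \<open>auto simp: N_def\<close>)
    also have "(\<Prod>k\<in>{..<N} - {i}. (zs!k) powi (x - ys[i := ys ! i + 1]!k - 1)) = C"
      unfolding C_def by (rule prod.cong) auto
    finally have b: "(\<Prod>k<N. (zs!k) powi (x - ys[i := ys ! i + 1]!k - 1)) = (zs!i) powi (x - (ys ! i + 1) - 1) * C" .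
    have c: "(zs!i) powi (x - (ys ! i + 1) - 1) = (zs!i) powi (x - ys ! i - 1) / zs ! i"
      using z0 by (simp add: power_int_diff power2_eq_square)
    show "Fn x n ys zs * eps (zs ! i) = Fn x n (ys[i := ys ! i + 1]) zs - Fn x n ys zs"
      unfolding Fn_def N_def[symmetric] length_list_update a b c
      using z0 by (simp add: eps_def field_simps power2_eq_square)
  qed
  also have "\<dots> = U x n (ys[i := ys ! i + 1]) - U x n ys"
    unfolding U_def N_def length_list_update
    by (rule circ_int_n_diff[OF _ contl_Fn r_ge0]) (use contl_Fn[of "ys[i := ys ! i + 1]"] in simp)
  finally show ?thesis .
qed

end

context setting
begin

lemma J_swap:
  assumes i: "Suc i < length ys" and eq: "ys ! i = ys ! Suc i"
  shows "Jc x n ys (Suc i) = of_real q * Jc x n ys i"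
proof -
  define N where "N = length ys"
  have iN: "Suc i < N" using i by (simp add: N_def)
  define H where "H = (\<lambda>zs. Fn x n ys zs * (eps (zs ! Suc i) - of_real q * eps (zs ! i)))"
  have cH: "contl r N H"
    unfolding H_def N_def using i
    by (intro contl_mult contl_Fn contl_diff contl_eps contl_const) auto
  have anti: "H (swp i zs) = - H zs" if zs: "zs \<in> torus r N" for zs
  proof -
    have lz: "length zs = N" using torus_length[OF zs] .
    define Pw where "Pw = (\<Prod>k<N. (zs!k) powi (x - ys!k - 1))"
    define Q where "Q = PQ q N i zs * TT N zs * Pw * EE N zs ^ n"
    have s1: "swp i zs ! i = zs ! Suc i" "swp i zs ! Suc i = zs ! i"
      using iN lz by (simp_all add: nth_swp)
    have pw: "(\<Prod>k<N. (swp i zs ! k) powi (x - ys!k - 1)) = Pw"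
    proof -
      have "(\<Prod>k<N. (swp i zs ! k) powi (x - ys!k - 1)) = (\<Prod>k<N. (zs ! k) powi (x - ys!(tau i k) - 1))"
        using prod_swp[OF lz iN, of "\<lambda>k z. z powi (x - ys!k - 1)"] by simp
      also have "\<dots> = Pw" unfolding Pw_def
        by (rule prod.cong) (use eq in \<open>auto simp: tau_def\<close>)
      finally show ?thesis .
    qed
    have ee: "EE N (swp i zs) = EE N zs"
      unfolding EE_def by (rule sum_swp[OF lz iN])
    have a: "cmod (zs ! i) = r" "cmod (zs ! Suc i) = r" using torus_nth[OF zs] iN by auto
    have "H zs = Q * (Af q (zs ! i) (zs ! Suc i) * (eps (zs ! Suc i) - of_real q * eps (zs ! i)))"
      unfolding H_def Fn_def N_def[symmetric] I_fun_PA PA_split[OF iN] Q_def Pw_def by (simp add: mult_ac)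
    also have "\<dots> = Q * (eps (zs ! Suc i) - eps (zs ! i))" by (simp add: eps_identity a)
    finally have h1: "H zs = Q * (eps (zs ! Suc i) - eps (zs ! i))" .
    have "H (swp i zs) = Q * (Af q (zs ! Suc i) (zs ! i) * (eps (zs ! i) - of_real q * eps (zs ! Suc i)))"
      unfolding H_def Fn_def N_def[symmetric] I_fun_PA PA_split[OF iN] s1 PQ_swp[OF lz iN] TT_swp[OF lz iN] pw ee
      unfolding Q_def by (simp add: mult_ac)
    also have "\<dots> = Q * (eps (zs ! i) - eps (zs ! Suc i))" by (simp add: eps_identity a)
    finally have h2: "H (swp i zs) = Q * (eps (zs ! i) - eps (zs ! Suc i))" .
    show ?thesis unfolding h1 h2 by (simp add: algebra_simps)
  qed
  have "circ_int_n r N H = circ_int_n r N (\<lambda>zs. H (swp i zs))"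
    by (rule circ_int_n_swap[OF cH iN r_ge0])
  also have "\<dots> = circ_int_n r N (\<lambda>zs. (-1) * H zs)"
    by (rule circ_int_n_cong[OF r_ge0]) (simp add: anti)
  also have "\<dots> = - circ_int_n r N H" unfolding circ_int_n_mult by simp
  finally have z: "circ_int_n r N H = 0" by simp
  have "circ_int_n r N H = Jc x n ys (Suc i) - of_real q * Jc x n ys i"
  proof -
    have "circ_int_n r N H = circ_int_n r N (\<lambda>zs. Fn x n ys zs * eps (zs ! Suc i) - of_real q * (Fn x n ys zs * eps (zs ! i)))"
      unfolding H_def by (rule circ_int_n_cong[OF r_ge0]) (simp add: algebra_simps)
    also have "\<dots> = circ_int_n r N (\<lambda>zs. Fn x n ys zs * eps (zs ! Suc i)) - circ_int_n r N (\<lambda>zs. of_real q * (Fn x n ys zs * eps (zs ! i)))"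
      by (rule circ_int_n_diff[OF _ _ r_ge0]) (use i in \<open>auto intro!: contl_mult contl_Fn contl_eps contl_const simp: N_def\<close>)
    also have "\<dots> = Jc x n ys (Suc i) - of_real q * Jc x n ys i"
      by (simp add: circ_int_n_mult Jc_def N_def)
    finally show ?thesis .
  qed
  then show ?thesis using z by simp
qed

end

definition fidx :: "int list \<Rightarrow> int \<Rightarrow> nat" where
  "fidx ys s = (LEAST j. j < length ys \<and> ys ! j = s)"

lemma count_card: "count (mset ys) s = card {i. i < length ys \<and> ys ! i = s}"
  by (simp add: count_mset count_list_eq_length_filter length_filter_conv_card eq_commute)

lemma fidx_props:
  assumes "s \<in> set ys"
  shows "fidx ys s < length ys" "ys ! fidx ys s = s" "\<And>k. k < fidx ys s \<Longrightarrow> ys ! k \<noteq> s"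
proof -
  obtain i where i: "i < length ys" "ys ! i = s" using assms by (auto simp: in_set_conv_nth)
  have *: "fidx ys s < length ys \<and> ys ! fidx ys s = s"
    unfolding fidx_def by (rule LeastI[of _ i]) (use i in auto)
  then show "fidx ys s < length ys" "ys ! fidx ys s = s" by auto
  show "ys ! k \<noteq> s" if "k < fidx ys s" for k
    using not_less_Least[OF that[unfolded fidx_def]] * that by (auto simp: fidx_def)
qed

lemma sorted_desc_nth:
  fixes ys :: "int list"
  assumes "sorted_wrt (\<ge>) ys" "i \<le> j" "j < length ys"
  shows "ys ! j \<le> ys ! i"
proof (cases "i = j")
  case True then show ?thesis by simp
next
  case False then show ?thesis using assms by (auto simp: sorted_wrt_iff_nth_less)
qed

lemma idx_interval:
  assumes srt: "sorted_wrt (\<ge>) ys" and s: "s \<in> set ys"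
  shows "{i. i < length ys \<and> ys ! i = s} = {fidx ys s..<fidx ys s + count (mset ys) s}"
proof -
  define S where "S = {i. i < length ys \<and> ys ! i = s}"
  define j where "j = fidx ys s"
  have fin: "finite S" unfolding S_def by simp
  have jS: "j \<in> S" using fidx_props[OF s] by (simp add: S_def j_def)
  define m where "m = Max S"
  have mS: "m \<in> S" unfolding m_def using fin jS by (intro Max_in) auto
  have sub1: "S \<subseteq> {j..m}"
  proof
    fix k assume k: "k \<in> S"
    have "j \<le> k" using fidx_props(3)[OF s, of k] k by (force simp: S_def j_def)
    moreover have "k \<le> m" unfolding m_def using fin k by simp
    ultimately show "k \<in> {j..m}" by simp
  qed
  have sub2: "{j..m} \<subseteq> S"
  proof
    fix k assume k: "k \<in> {j..m}"
    have mN: "m < length ys" using mS by (simp add: S_def)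
    have "ys ! k \<le> ys ! j" by (rule sorted_desc_nth[OF srt]) (use k mN in auto)
    moreover have "ys ! m \<le> ys ! k" by (rule sorted_desc_nth[OF srt]) (use k mN in auto)
    ultimately show "k \<in> S" using jS mS k mN by (auto simp: S_def)
  qed
  have SE: "S = {j..m}" using sub1 sub2 by blast
  have "count (mset ys) s = card S" unfolding S_def by (rule count_card)
  also have "\<dots> = Suc m - j" unfolding SE by simp
  finally have c: "count (mset ys) s = Suc m - j" .
  have "j \<le> m" using jS sub1 SE mS by auto
  then have "{j..<j + count (mset ys) s} = {j..m}" unfolding c by auto
  then show ?thesis using SE by (simp add: S_def j_def)
qed

lemma sorted_update_fidx:
  assumes srt: "sorted_wrt (\<ge>) ys" and s: "s \<in> set ys"
  shows "sorted_wrt (\<ge>) (ys[fidx ys s := s + 1])"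
  unfolding sorted_wrt_iff_nth_less
proof (intro allI impI)
  fix a b assume ab: "a < b" "b < length (ys[fidx ys s := s + 1])"
  define j where "j = fidx ys s"
  have jp: "j < length ys" "ys ! j = s" "\<And>k. k < j \<Longrightarrow> ys ! k \<noteq> s" using fidx_props[OF s] by (auto simp: j_def)
  have bN: "b < length ys" using ab by simp
  have ba: "ys ! b \<le> ys ! a" using sorted_desc_nth[OF srt, of a b] ab by simp
  show "ys[fidx ys s := s + 1] ! b \<le> ys[fidx ys s := s + 1] ! a"
  proof (cases "a = j")
    case True
    then have "b \<noteq> j" using ab by simp
    moreover have "ys ! b \<le> s" using sorted_desc_nth[OF srt, of j b] ab True jp by simp
    ultimately show ?thesis using True jp bN ab by (simp add: j_def nth_list_update)
  next
    case False
    show ?thesis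
    proof (cases "b = j")
      case True
      have "ys ! a \<ge> s" using ba True jp by simp
      moreover have "ys ! a \<noteq> s" using jp(3)[of a] ab True by simp
      ultimately have "ys ! a \<ge> s + 1" by linarith
      then show ?thesis using True False jp ab by (simp add: j_def nth_list_update)
    next
      case F2: False
      then show ?thesis using False ba ab by (simp add: j_def nth_list_update)
    qed
  qed
qed

definition sdesc :: "int multiset \<Rightarrow> int list" where
  "sdesc X = rev (sorted_list_of_multiset X)"

lemma sdesc_sorted: "sorted_wrt (\<ge>) (sdesc X)"
  unfolding sdesc_def sorted_wrt_rev by simp

lemma mset_sdesc[simp]: "mset (sdesc X) = X"
  by (simp add: sdesc_def)

lemma sdesc_mset:
  assumes "sorted_wrt (\<ge>) ys"
  shows "sdesc (mset ys) = ys"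
proof -
  have "sort ys = rev ys"
    by (rule properties_for_sort) (use assms in \<open>simp_all add: sorted_wrt_rev\<close>)
  then show ?thesis by (simp add: sdesc_def)
qed

lemma last_min:
  fixes ys :: "int list"
  assumes "sorted_wrt (\<ge>) ys" "ys \<noteq> []"
  shows "last ys = Min (set ys)"
proof -
  have "\<forall>y\<in>set ys. last ys \<le> y"
  proof
    fix y assume "y \<in> set ys"
    then obtain i where i: "i < length ys" "y = ys ! i" by (auto simp: in_set_conv_nth)
    show "last ys \<le> y" using sorted_desc_nth[OF assms(1), of i "length ys - 1"] i assms(2)
      by (simp add: last_conv_nth)
  qed
  then show ?thesis using assms by (intro Min_eqI[symmetric]) auto
qed

context setting
begin

lemma Jc_interval:
  assumes srt: "sorted_wrt (\<ge>) ys" and s: "s \<in> set ys"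
  shows "(\<Sum>i\<in>{i. i < length ys \<and> ys ! i = s}. Jc x n ys i) =
          of_real (qint q (count (mset ys) s)) * Jc x n ys (fidx ys s)"
proof -
  define j where "j = fidx ys s"
  define c where "c = count (mset ys) s"
  have IE: "{i. i < length ys \<and> ys ! i = s} = {j..<j + c}" unfolding j_def c_def by (rule idx_interval[OF srt s])
  have inS: "j + d < length ys \<and> ys ! (j + d) = s" if "d < c" for d
  proof -
    have "j + d \<in> {j..<j + c}" using that by simp
    then show ?thesis unfolding IE[symmetric] by simp
  qed
  have step: "Jc x n ys (j + d) = of_real q ^ d * Jc x n ys j" if "d < c" for d
    using that
  proof (induction d)
    case 0 then show ?case by simp
  next
    case (Suc d)
    have a: "Suc (j + d) < length ys" using inS[OF Suc.prems] by simp
    have b: "ys ! (j + d) = ys ! Suc (j + d)" using inS[OF Suc.prems] inS[of d] Suc.prems by simp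
    have "Jc x n ys (j + Suc d) = of_real q * Jc x n ys (j + d)"
      using J_swap[OF a b] by simp
    then show ?case using Suc.IH Suc.prems by simp
  qed
  have "(\<Sum>i\<in>{j..<j + c}. Jc x n ys i) = (\<Sum>d<c. Jc x n ys (j + d))"
    using sum.shift_bounds_nat_ivl[of "Jc x n ys" 0 j c] by (simp add: add.commute atLeast0LessThan)
  also have "\<dots> = (\<Sum>d<c. of_real q ^ d * Jc x n ys j)" by (rule sum.cong) (auto simp: step)
  also have "\<dots> = of_real (qint q c) * Jc x n ys j"
    by (simp add: qint_def sum_distrib_right)
  finally show ?thesis unfolding IE c_def j_def .
qed

lemma U_step:
  assumes srt: "sorted_wrt (\<ge>) ys"
  shows "U x (Suc n) ys = (\<Sum>s\<in>set ys. of_real (qint q (count (mset ys) s)) *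
          (U x n (ys[fidx ys s := s + 1]) - U x n ys))"
proof -
  have "U x (Suc n) ys = (\<Sum>i<length ys. Jc x n ys i)" by (rule U_Suc)
  also have "\<dots> = (\<Sum>s\<in>set ys. \<Sum>i\<in>{i. i \<in> {..<length ys} \<and> ys ! i = s}. Jc x n ys i)"
    by (rule sum.group[symmetric]) (auto simp: image_subset_iff)
  also have "\<dots> = (\<Sum>s\<in>set ys. of_real (qint q (count (mset ys) s)) * Jc x n ys (fidx ys s))"
    by (rule sum.cong[OF refl]) (use Jc_interval[OF srt] in simp)
  also have "\<dots> = (\<Sum>s\<in>set ys. of_real (qint q (count (mset ys) s)) * (U x n (ys[fidx ys s := s + 1]) - U x n ys))"
    by (rule sum.cong[OF refl]) (use J_shift fidx_props in simp)
  finally show ?thesis .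
qed

definition Um :: "int \<Rightarrow> nat \<Rightarrow> int multiset \<Rightarrow> complex" where
  "Um x n X = U x n (sdesc X)"

lemma Um_step:
  "Um x (Suc n) X = (\<Sum>s\<in>set_mset X. of_real (qint q (count X s)) *
      (Um x n (add_mset (s + 1) (X - {#s#})) - Um x n X))"
proof -
  define ys where "ys = sdesc X"
  have srt: "sorted_wrt (\<ge>) ys" unfolding ys_def by (rule sdesc_sorted)
  have X: "X = mset ys" by (simp add: ys_def)
  have "Um x (Suc n) X = (\<Sum>s\<in>set ys. of_real (qint q (count (mset ys) s)) *
          (U x n (ys[fidx ys s := s + 1]) - U x n ys))"
    unfolding Um_def ys_def[symmetric] by (rule U_step[OF srt])
  also have "\<dots> = (\<Sum>s\<in>set_mset X. of_real (qint q (count X s)) *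
      (Um x n (add_mset (s + 1) (X - {#s#})) - Um x n X))"
  proof (rule sum.cong)
    show "set ys = set_mset X" by (simp add: X)
  next
    fix s assume s: "s \<in> set_mset X"
    then have s': "s \<in> set ys" by (simp add: X)
    have "add_mset (s + 1) (X - {#s#}) = mset (ys[fidx ys s := s + 1])"
      using mset_update[OF fidx_props(1)[OF s'], of "s + 1"] fidx_props(2)[OF s'] by (simp add: X)
    then have "Um x n (add_mset (s + 1) (X - {#s#})) = U x n (ys[fidx ys s := s + 1])"
      unfolding Um_def using sdesc_mset[OF sorted_update_fidx[OF srt s']] by simp
    moreover have "Um x n X = U x n ys" by (simp add: Um_def ys_def)
    ultimately show "of_real (qint q (count (mset ys) s)) * (U x n (ys[fidx ys s := s + 1]) - U x n ys) =
        of_real (qint q (count X s)) * (Um x n (add_mset (s + 1) (X - {#s#})) - Um x n X)"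
      by (simp add: X)
  qed
  finally show ?thesis .
qed

lemma U_zero: "U x 0 ys = V x (length ys) ys"
  unfolding U_def V_def Fn_def by simp

lemma Um_zero:
  assumes "X \<noteq> {#}"
  shows "Um x 0 X = (if Min (set_mset X) = x then 1 else 0)"
proof -
  define ys where "ys = sdesc X"
  have srt: "sorted_wrt (\<ge>) ys" unfolding ys_def by (rule sdesc_sorted)
  have ne: "ys \<noteq> []" using assms by (auto simp: ys_def dest: arg_cong[of _ _ mset])
  have "Um x 0 X = V x (length ys) ys" by (simp add: Um_def U_zero ys_def)
  also have "\<dots> = (if last ys = x then 1 else 0)" using V_init[OF srt] ne by simp
  also have "last ys = Min (set_mset X)" using last_min[OF srt ne] by (simp add: ys_def[symmetric] flip: set_mset_mset) (simp add: ys_def)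
  finally show ?thesis .
qed

lemma gen_Um:
  assumes "X \<noteq> {#}"
  shows "of_real ((tazrp_gen q ^^ n) (\<lambda>X. if Min (set_mset X) = x then 1 else 0) X) = Um x n X"
  using assms
proof (induction n arbitrary: X)
  case 0 then show ?case by (simp add: Um_zero)
next
  case (Suc n)
  define g where "g = (tazrp_gen q ^^ n) (\<lambda>X. if Min (set_mset X) = x then 1 else 0)"
  have "(tazrp_gen q ^^ Suc n) (\<lambda>X. if Min (set_mset X) = x then 1 else 0) X = tazrp_gen q g X"
    by (simp add: g_def)
  also have "\<dots> = (\<Sum>s\<in>set_mset X. qint q (count X s) * (g (add_mset (s + 1) (X - {#s#})) - g X))"
    by (simp only: tazrp_gen_def)
  finally have e: "(tazrp_gen q ^^ Suc n) (\<lambda>X. if Min (set_mset X) = x then 1 else 0) X =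
     (\<Sum>s\<in>set_mset X. qint q (count X s) * (g (add_mset (s + 1) (X - {#s#})) - g X))" .
  have ih: "of_real (g Y) = Um x n Y" if "Y \<noteq> {#}" for Y unfolding g_def by (rule Suc.IH[OF that])
  show ?case unfolding e Um_step of_real_sum
    by (rule sum.cong[OF refl]) (simp add: ih Suc.prems)
qed

end

lemma tail_to_zero:
  fixes Mb :: "nat \<Rightarrow> real"
  assumes "summable Mb"
  shows "(\<lambda>K. \<Sum>k. Mb (k + K)) \<longlonglongrightarrow> 0"
proof -
  have "(\<lambda>K. suminf Mb - (\<Sum>i<K. Mb i)) \<longlonglongrightarrow> suminf Mb - suminf Mb"
    by (intro tendsto_intros summable_LIMSEQ assms)
  then show ?thesis using suminf_minus_initial_segment[OF assms] by simp
qed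

lemma circ_int_n_series:
  assumes r: "r \<ge> 0" and cG: "\<And>k. contl r N (G k)" and cGs: "contl r N Gs"
    and sm: "\<And>zs. zs \<in> torus r N \<Longrightarrow> (\<lambda>k. G k zs) sums Gs zs"
    and bd: "\<And>k zs. zs \<in> torus r N \<Longrightarrow> cmod (G k zs) \<le> Mb k" and sMb: "summable Mb"
  shows "(\<lambda>k. circ_int_n r N (G k)) sums circ_int_n r N Gs"
proof -
  have ps: "(\<Sum>k<K. circ_int_n r N (G k)) = circ_int_n r N (\<lambda>zs. \<Sum>k<K. G k zs)" for K
    by (rule circ_int_n_sum[symmetric]) (use cG r in auto)
  have cS: "contl r N (\<lambda>zs. \<Sum>k<K. G k zs)" for K by (intro contl_sum cG)
  have est: "cmod (circ_int_n r N Gs - (\<Sum>k<K. circ_int_n r N (G k))) \<le> r ^ N * (\<Sum>k. Mb (k + K))" for K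
  proof -
    have "circ_int_n r N Gs - (\<Sum>k<K. circ_int_n r N (G k)) = circ_int_n r N (\<lambda>zs. Gs zs - (\<Sum>k<K. G k zs))"
      unfolding ps by (rule circ_int_n_diff[symmetric, OF cGs cS r])
    also have "cmod \<dots> \<le> r ^ N * (\<Sum>k. Mb (k + K))"
    proof (rule circ_int_n_bound[OF contl_diff[OF cGs cS] r])
      fix zs assume zs: "zs \<in> torus r N"
      have "(\<lambda>k. G (k + K) zs) sums (Gs zs - (\<Sum>k<K. G k zs))"
        by (rule sums_split_initial_segment[OF sm[OF zs]])
      then have "Gs zs - (\<Sum>k<K. G k zs) = (\<Sum>k. G (k + K) zs)" by (simp add: sums_iff)
      also have "cmod \<dots> \<le> (\<Sum>k. Mb (k + K))"
        by (rule norm_suminf_le) (use bd[OF zs] summable_ignore_initial_segment[OF sMb] in auto)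
      finally show "cmod (Gs zs - (\<Sum>k<K. G k zs)) \<le> (\<Sum>k. Mb (k + K))" .
    qed
    finally show ?thesis .
  qed
  have "(\<lambda>K. circ_int_n r N Gs - (\<Sum>k<K. circ_int_n r N (G k))) \<longlonglongrightarrow> 0"
  proof (rule Lim_null_comparison)
    show "\<forall>\<^sub>F K in sequentially. norm (circ_int_n r N Gs - (\<Sum>k<K. circ_int_n r N (G k))) \<le> r ^ N * (\<Sum>k. Mb (k + K))"
      using est by simp
    show "(\<lambda>K. r ^ N * (\<Sum>k. Mb (k + K))) \<longlonglongrightarrow> 0"
      using tendsto_mult_right_zero[OF tail_to_zero[OF sMb]] by simp
  qed
  then have "(\<lambda>K. circ_int_n r N Gs - (circ_int_n r N Gs - (\<Sum>k<K. circ_int_n r N (G k)))) \<longlonglongrightarrow> circ_int_n r N Gs - 0"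
    by (intro tendsto_diff tendsto_const)
  then show ?thesis by (simp add: sums_def)
qed

context setting
begin

lemma exp_expand:
  assumes zs: "zs \<in> torus r N" and ly: "length ys = N"
  shows "(\<lambda>n. of_real (t ^ n / fact n) * Fn x n ys zs) sums
     (I_fun q N zs * (\<Prod>i<N. (zs!i) powi (x - ys!i - 1) * exp (eps (zs!i) * of_real t)))"
proof -
  have "(\<lambda>n. (of_real t * EE N zs) ^ n /\<^sub>R fact n) sums exp (of_real t * EE N zs)"
    by (rule exp_converges)
  then have "(\<lambda>n. (I_fun q N zs * (\<Prod>i<N. (zs!i) powi (x - ys!i - 1))) * ((of_real t * EE N zs) ^ n /\<^sub>R fact n)) sums
      ((I_fun q N zs * (\<Prod>i<N. (zs!i) powi (x - ys!i - 1))) * exp (of_real t * EE N zs))"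
    by (rule sums_mult)
  moreover have "(I_fun q N zs * (\<Prod>i<N. (zs!i) powi (x - ys!i - 1))) * ((of_real t * EE N zs) ^ n /\<^sub>R fact n)
      = of_real (t ^ n / fact n) * Fn x n ys zs" for n
    by (simp add: Fn_def ly scaleR_conv_of_real power_mult_distrib mult_ac divide_inverse)
  moreover have "(I_fun q N zs * (\<Prod>i<N. (zs!i) powi (x - ys!i - 1))) * exp (of_real t * EE N zs)
      = I_fun q N zs * (\<Prod>i<N. (zs!i) powi (x - ys!i - 1) * exp (eps (zs!i) * of_real t))"
    by (simp add: EE_def sum_distrib_left exp_sum prod.distrib mult_ac)
  ultimately show ?thesis by simp
qed

lemma main_sorted:
  assumes srt: "sorted_wrt (\<ge>) ys" and ne: "ys \<noteq> []" and t: "t \<ge> 0"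
  shows "complex_of_real (leftmost_prob q (mset ys) t x) =
    circ_int_n r (length ys) (\<lambda>zs. I_fun q (length ys) zs *
       (\<Prod>i<length ys. (zs!i) powi (x - ys!i - 1) * exp (eps (zs!i) * of_real t)))"
proof -
  define N where "N = length ys"
  define f where "f = (\<lambda>X. if Min (set_mset X) = x then 1 else (0::real))"
  define Gs where "Gs = (\<lambda>zs. I_fun q N zs * (\<Prod>i<N. (zs!i) powi (x - ys!i - 1) * exp (eps (zs!i) * of_real t)))"
  obtain B0 where B0: "\<forall>zs\<in>torus r N. cmod (I_fun q N zs * (\<Prod>i<N. (zs!i) powi (x - ys!i - 1))) \<le> B0"
    using contl_bound[OF contl_integrand[of N "\<lambda>i. x - ys!i - 1"]] by blast
  obtain BE where BE: "\<forall>zs\<in>torus r N. cmod (EE N zs) \<le> BE"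
    using contl_bound[OF contl_EE] by blast
  define Mb where "Mb = (\<lambda>n. B0 * ((t * BE) ^ n /\<^sub>R fact n))"
  have sMb: "summable Mb" unfolding Mb_def by (intro summable_mult summable_exp_generic)
  have cGs: "contl r N Gs" unfolding Gs_def
    by (intro contl_mult contl_I contl_prod contl_powi_nth contl_exp contl_const contl_eps r_pos) auto
  have sums1: "(\<lambda>n. circ_int_n r N (\<lambda>zs. of_real (t ^ n / fact n) * Fn x n ys zs)) sums circ_int_n r N Gs"
  proof (rule circ_int_n_series[OF r_ge0 _ cGs])
    show "contl r N (\<lambda>zs. of_real (t ^ n / fact n) * Fn x n ys zs)" for n
      by (intro contl_mult contl_const) (use contl_Fn in \<open>simp add: N_def\<close>)
    show "(\<lambda>n. of_real (t ^ n / fact n) * Fn x n ys zs) sums Gs zs" if "zs \<in> torus r N" for zs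
      unfolding Gs_def by (rule exp_expand[OF that N_def[symmetric]])
    show "cmod (of_real (t ^ n / fact n) * Fn x n ys zs) \<le> Mb n" if zs: "zs \<in> torus r N" for n zs
    proof -
      have b0: "cmod (I_fun q N zs * (\<Prod>i<N. (zs!i) powi (x - ys!i - 1))) \<le> B0" using B0 zs by blast
      have be: "cmod (EE N zs) \<le> BE" using BE zs by blast
      have "cmod (of_real (t ^ n / fact n) * Fn x n ys zs) =
          t ^ n / fact n * (cmod (I_fun q N zs * (\<Prod>i<N. (zs!i) powi (x - ys!i - 1))) * cmod (EE N zs) ^ n)"
        using t by (simp add: Fn_def N_def[symmetric] norm_mult norm_power norm_divide)
      also have "\<dots> \<le> t ^ n / fact n * (B0 * BE ^ n)"
        using t b0 be order_trans[OF norm_ge_zero b0] by (intro mult_left_mono mult_mono power_mono) auto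
      also have "\<dots> = Mb n" by (simp add: Mb_def power_mult_distrib divide_inverse mult_ac)
      finally show ?thesis .
    qed
  qed (rule sMb)
  have trm: "circ_int_n r N (\<lambda>zs. of_real (t ^ n / fact n) * Fn x n ys zs) =
      of_real (t ^ n / fact n * (tazrp_gen q ^^ n) f (mset ys))" for n
  proof -
    have "circ_int_n r N (\<lambda>zs. of_real (t ^ n / fact n) * Fn x n ys zs) = of_real (t ^ n / fact n) * U x n ys"
      unfolding circ_int_n_mult U_def N_def ..
    also have "U x n ys = Um x n (mset ys)" by (simp add: Um_def sdesc_mset[OF srt])
    also have "\<dots> = of_real ((tazrp_gen q ^^ n) f (mset ys))"
      unfolding f_def by (rule gen_Um[symmetric]) (use ne in simp)
    finally show ?thesis by simp
  qed
  have "(\<lambda>n. complex_of_real (t ^ n / fact n * (tazrp_gen q ^^ n) f (mset ys))) sums circ_int_n r N Gs"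
    using sums1 unfolding trm .
  then have "summable (\<lambda>n. t ^ n / fact n * (tazrp_gen q ^^ n) f (mset ys))"
    using summable_complex_of_real sums_summable by blast
  then have "(\<lambda>n. complex_of_real (t ^ n / fact n * (tazrp_gen q ^^ n) f (mset ys))) sums
      complex_of_real (\<Sum>n. t ^ n / fact n * (tazrp_gen q ^^ n) f (mset ys))"
    by (subst sums_of_real_iff) (rule summable_sums)
  with \<open>(\<lambda>n. complex_of_real _) sums circ_int_n r N Gs\<close>
  have "complex_of_real (\<Sum>n. t ^ n / fact n * (tazrp_gen q ^^ n) f (mset ys)) = circ_int_n r N Gs"
    using sums_unique2 by blast
  then show ?thesis
    by (simp add: leftmost_prob_def tazrp_expect_def f_def Gs_def N_def)
qed

end

theorem theorem2:
  fixes N :: nat and q r t :: real and y :: "nat \<Rightarrow> int" and x :: int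
  assumes "N \<ge> 1"
    and "0 < \<bar>q\<bar>" and "\<bar>q\<bar> < 1"
    and "0 < r" and "r < (1 - \<bar>q\<bar>) / \<bar>1 - q\<bar>"
    and "\<forall>i\<in>{1..<N}. y (Suc i) \<le> y i"
    and "t \<ge> 0"
  shows "complex_of_real (leftmost_prob q (mset (map y [1..<Suc N])) t x) =
    circ_int_n r N (\<lambda>zs. I_fun q N zs *
       (\<Prod>i<N. (zs!i) powi (x - y (Suc i) - 1) * exp (eps (zs!i) * of_real t)))"
proof -
  interpret setting q r using assms(2-5) by unfold_locales auto
  define ys where "ys = map y [1..<Suc N]"
  have len: "length ys = N" by (simp add: ys_def)
  have nth: "ys ! i = y (Suc i)" if "i < N" for i using that by (simp add: ys_def del: upt_Suc)
  have srt: "sorted_wrt (\<ge>) ys"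
  proof (subst sorted_wrt_iff_nth_Suc_transp)
    show "transp ((\<ge>) :: int \<Rightarrow> int \<Rightarrow> bool)" by (auto simp: transp_def)
    show "\<forall>i. Suc i < length ys \<longrightarrow> ys ! Suc i \<le> ys ! i"
    proof (intro allI impI)
      fix i assume i: "Suc i < length ys"
      then have "Suc i \<in> {1..<N}" using len by simp
      then have "y (Suc (Suc i)) \<le> y (Suc i)" using assms(6) by blast
      then show "ys ! Suc i \<le> ys ! i" using i len nth by simp
    qed
  qed
  have ne: "ys \<noteq> []" using len assms(1) by auto
  have "complex_of_real (leftmost_prob q (mset ys) t x) =
    circ_int_n r (length ys) (\<lambda>zs. I_fun q (length ys) zs *
       (\<Prod>i<length ys. (zs!i) powi (x - ys!i - 1) * exp (eps (zs!i) * of_real t)))"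
    by (rule main_sorted[OF srt ne assms(7)])
  also have "\<dots> = circ_int_n r N (\<lambda>zs. I_fun q N zs *
       (\<Prod>i<N. (zs!i) powi (x - y (Suc i) - 1) * exp (eps (zs!i) * of_real t)))"
    unfolding len by (intro arg_cong[where f="circ_int_n r N"] ext arg_cong[where f="\<lambda>p. I_fun q N _ * p"] prod.cong refl) (simp add: nth)
  finally show ?thesis unfolding ys_def .
qed

end
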